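(* Let $\tau=\tau_1\dotsm\tau_l$ be a weak composition with $l\ge 3$ and $\tau_1,\tau_2\ge 1$, and let $(G_1,u_1),\dots,(G_l,u_l)$ be rooted graphs. Let $G=S^\tau(G_1,\dots,G_l)$, and let $H=S^{\tau_3\dotsm\tau_l}(G_3,\dots,G_l)$, regarded as a rooted graph whose root is its center. Then \[ X_G=X_{S^{(\tau_1-1)\tau_2 1}(G_1,\,G_2,\,H)}+X_{G_1^{\tau_1-1}}\,X_{S^{\tau_2\dotsm\tau_l}(G_2,\dots,G_l)}-X_{P^{\tau_1+\tau_2-1}(G_1,G_2)}\,X_H. \]
   Context: All graphs are finite simple graphs. The chromatic symmetric function of a graph $G$ is $X_G=\sum_{\kappa}\prod_{v\in V(G)}x_{\kappa(v)}$, where $\kappa$ ranges over proper colorings $\kappa:V(G)\to\{1,2,\dots\}$. For a weak composition (sequence of nonnegative integers) $\tau=\tau_1\dotsm\tau_l$ and rooted graphs $(G_i,u_i)$, the spider-conjoined graph $S^\tau(G_1,\dots,G_l)$ is obtained as follows: take a center vertex $c$ and $l$ paths starting at $c$, pairwise disjoint except at $c$, the $i$-th of length $\tau_i$ with other end $s_i$ (so $s_i=c$ if $\tau_i=0$); then identify $u_i$ with $s_i$ for all $i$ (the $G_i$ being disjoint). Its center is $c$. For rooted graphs $(G,u)$, $(H,v)$ and $k\ge0$, $P^k(G,H)$ is obtained from the disjoint union of $G$ and $H$ by adding a path of length $k$ joining $u$ and $v$ (for $k=0$ identifying them), and $G^k=P^k(G,K_1)$ is $G$ with a pendant path of length $k$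 at its root. *)

theory Defs
  imports Main "HOL-Library.Multiset" "HOL-Library.FuncSet"
begin

type_synonym 'a graph = "'a set \<times> 'a set set"

definition verts :: "'a graph \<Rightarrow> 'a set" where "verts G = fst G"
definition edges :: "'a graph \<Rightarrow> 'a set set" where "edges G = snd G"

definition wf_graph :: "'a graph \<Rightarrow> bool" where
  "wf_graph G \<longleftrightarrow> finite (verts G) \<and> (\<forall>e\<in>edges G. e \<subseteq> verts G \<and> card e = 2)"

definition wf_rooted :: "'a graph \<times> 'a \<Rightarrow> bool" where
  "wf_rooted Gu \<longleftrightarrow> wf_graph (fst Gu) \<and> snd Gu \<in> verts (fst Gu)"

text \<open>A monomial in x_1, x_2, ... is represented by the multiset of the indices
  (with multiplicity); a (formal) symmetric function with integer coefficients is
  represented by its coefficient function.\<close>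

type_synonym sfun = "nat multiset \<Rightarrow> int"

definition proper_coloring :: "'a graph \<Rightarrow> ('a \<Rightarrow> nat) \<Rightarrow> bool" where
  "proper_coloring G \<kappa> \<longleftrightarrow>
     \<kappa> \<in> verts G \<rightarrow>\<^sub>E {1..} \<and>
     (\<forall>e\<in>edges G. \<forall>x\<in>e. \<forall>y\<in>e. x \<noteq> y \<longrightarrow> \<kappa> x \<noteq> \<kappa> y)"

definition csf :: "'a graph \<Rightarrow> sfun" where
  "csf G m = int (card {\<kappa>. proper_coloring G \<kappa> \<and> image_mset \<kappa> (mset_set (verts G)) = m})"

definition sf_times :: "sfun \<Rightarrow> sfun \<Rightarrow> sfun" where
  "sf_times f g m = (\<Sum>A\<in>{A. A \<subseteq># m}. f A * g (m - A))"

definition gmap :: "('a \<Rightarrow> 'b) \<Rightarrow> 'a graph \<Rightarrow> 'b graph" where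
  "gmap f G = (f ` verts G, (\<lambda>e. f ` e) ` edges G)"

type_synonym 'a svert = "(nat \<times> 'a) + (nat \<times> nat)"

text \<open>Vertex Inl (i, x): vertex x of the i-th graph (0-based);
  Inr (i, j): j-th vertex (distance j from the centre) of the i-th leg.\<close>

definition spider_center :: "'a svert" where "spider_center = Inr (0, 0)"

definition spider_base :: "nat list \<Rightarrow> ('a graph \<times> 'a) list \<Rightarrow> 'a svert graph" where
  "spider_base \<tau> Gs =
    ({Inl (i, x) | i x. i < length Gs \<and> x \<in> verts (fst (Gs ! i))}
       \<union> {Inr (i, j) | i j. i < length Gs \<and> j \<le> \<tau> ! i},
     {{Inl (i, x), Inl (i, y)} | i x y. i < length Gs \<and> {x, y} \<in> edges (fst (Gs ! i))}
       \<union> {{Inr (i, j), Inr (i, Suc j)} | i j. i < length Gs \<and> j < \<tau> ! i})"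

text \<open>Identification: the start of every leg becomes the centre, the end of the i-th leg
  is identified with the root u_i (so u_i becomes the centre if \<tau>_i = 0).\<close>
fun spider_glue :: "nat list \<Rightarrow> ('a graph \<times> 'a) list \<Rightarrow> 'a svert \<Rightarrow> 'a svert" where
  "spider_glue \<tau> Gs (Inl (i, x)) =
     (if i < length Gs \<and> x = snd (Gs ! i) \<and> \<tau> ! i = 0 then spider_center else Inl (i, x))"
| "spider_glue \<tau> Gs (Inr (i, j)) =
     (if j = 0 then spider_center
      else if j = \<tau> ! i then Inl (i, snd (Gs ! i)) else Inr (i, j))"

text \<open>The spider-conjoined graph S^\<tau>(G_1,...,G_l), l = length Gs = length \<tau>,
  with centre spider_center.\<close>
definition spider :: "nat list \<Rightarrow> ('a graph \<times> 'a) list \<Rightarrow> 'a svert graph" where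
  "spider \<tau> Gs =
    (let B = gmap (spider_glue \<tau> Gs) (spider_base \<tau> Gs)
     in (insert spider_center (verts B), edges B))"

text \<open>P^k(G,H): disjoint union of G (as Inl (0, _)) and H (as Inl (1, _)) plus a path
  Inr (0, 0), ..., Inr (0, k) from u to v (identifying u and v if k = 0).\<close>
definition path_base :: "nat \<Rightarrow> 'a graph \<times> 'a \<Rightarrow> 'a graph \<times> 'a \<Rightarrow> 'a svert graph" where
  "path_base k Gu Hv =
    ({Inl (0, x) | x. x \<in> verts (fst Gu)} \<union> {Inl (1, y) | y. y \<in> verts (fst Hv)}
       \<union> {Inr (0, j) | j. j \<le> k},
     {{Inl (0, x), Inl (0, y)} | x y. {x, y} \<in> edges (fst Gu)}
       \<union> {{Inl (1, x), Inl (1, y)} | x y. {x, y} \<in> edges (fst Hv)}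
       \<union> {{Inr (0, j), Inr (0, Suc j)} | j. j < k})"

fun path_glue :: "nat \<Rightarrow> 'a graph \<times> 'a \<Rightarrow> 'a graph \<times> 'a \<Rightarrow> 'a svert \<Rightarrow> 'a svert" where
  "path_glue k Gu Hv (Inl (i, x)) =
     (if i = 1 \<and> x = snd Hv \<and> k = 0 then Inl (0, snd Gu) else Inl (i, x))"
| "path_glue k Gu Hv (Inr (i, j)) =
     (if j = 0 then Inl (0, snd Gu)
      else if j = k then Inl (1, snd Hv) else Inr (i, j))"

definition Pk :: "nat \<Rightarrow> 'a graph \<times> 'a \<Rightarrow> 'a graph \<times> 'a \<Rightarrow> 'a svert graph" where
  "Pk k Gu Hv = gmap (path_glue k Gu Hv) (path_base k Gu Hv)"

text \<open>K_1 rooted at its unique vertex, and G^k = P^k(G, K_1).\<close>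
definition K1 :: "'a graph \<times> 'a" where "K1 = (({undefined}, {}), undefined)"

definition pendant :: "nat \<Rightarrow> 'a graph \<times> 'a \<Rightarrow> 'a svert graph" where
  "pendant k Gu = Pk k Gu K1"

definition rmap :: "('a \<Rightarrow> 'b) \<Rightarrow> 'a graph \<times> 'a \<Rightarrow> 'b graph \<times> 'b" where
  "rmap f Gu = (gmap f (fst Gu), f (snd Gu))"

end

theory Submission
  imports Defs
begin

lemma msub_add: "A \<subseteq># add_mset x m \<Longrightarrow> A \<subseteq># m \<or> (\<exists>B. B \<subseteq># m \<and> A = add_mset x B)"
proof (cases "x \<in># A")
  case True
  assume a: "A \<subseteq># add_mset x m"
  have "A - {#x#} \<subseteq># m" unfolding subseteq_mset_def
  proof
    fix y have "count A y \<le> count (add_mset x m) y" using a by (simp add: subseteq_mset_def)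
    then show "count (A - {#x#}) y \<le> count m y" by auto
  qed
  moreover have "A = add_mset x (A - {#x#})" using True by simp
  ultimately show ?thesis by blast
next
  case False
  assume a: "A \<subseteq># add_mset x m"
  have "A \<subseteq># m" unfolding subseteq_mset_def
  proof
    fix y have "count A y \<le> count (add_mset x m) y" using a by (simp add: subseteq_mset_def)
    then show "count A y \<le> count m y" using False by (cases "y = x") (auto simp: not_in_iff)
  qed
  then show ?thesis by blast
qed
lemma finite_msubsets: "finite {A. A \<subseteq># (m::'b multiset)}"
proof (induction m)
  case empty then show ?case by simp
next
  case (add x m)
  have "{A. A \<subseteq># add_mset x m} \<subseteq> {A. A \<subseteq># m} \<union> add_mset x ` {A. A \<subseteq># m}"
  proof
    fix A assume "A \<in> {A. A \<subseteq># add_mset x m}"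
    then have "A \<subseteq># m \<or> (\<exists>B. B \<subseteq># m \<and> A = add_mset x B)" using msub_add by simp
    then show "A \<in> {A. A \<subseteq># m} \<union> add_mset x ` {A. A \<subseteq># m}" by auto
  qed
  then show ?case using add by (meson finite_UnI finite_imageI finite_subset)
qed


definition adj :: "'a graph \<Rightarrow> 'a \<Rightarrow> 'a \<Rightarrow> bool" where
  "adj G x y \<longleftrightarrow> (\<exists>e\<in>edges G. x \<in> e \<and> y \<in> e \<and> x \<noteq> y)"

definition cols :: "'a set \<Rightarrow> ('a \<Rightarrow> 'a \<Rightarrow> bool) \<Rightarrow> nat multiset \<Rightarrow> ('a \<Rightarrow> nat) set" where
  "cols V R m = {\<kappa>. \<kappa> \<in> V \<rightarrow>\<^sub>E {1..} \<and> (\<forall>x\<in>V. \<forall>y\<in>V. R x y \<longrightarrow> \<kappa> x \<noteq> \<kappa> y)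
      \<and> image_mset \<kappa> (mset_set V) = m}"

definition cs :: "'a set \<Rightarrow> ('a \<Rightarrow> 'a \<Rightarrow> bool) \<Rightarrow> sfun" where
  "cs V R m = int (card (cols V R m))"

lemma finite_cols: assumes "finite V" shows "finite (cols V R m)"
proof (rule finite_subset[OF _ finite_PiE[of V "\<lambda>_. set_mset m"]])
  show "cols V R m \<subseteq> V \<rightarrow>\<^sub>E set_mset m"
  proof
    fix \<kappa> assume k: "\<kappa> \<in> cols V R m"
    show "\<kappa> \<in> V \<rightarrow>\<^sub>E set_mset m"
    proof (rule PiE_I)
      fix x assume "x \<in> V"
      then have "\<kappa> x \<in># image_mset \<kappa> (mset_set V)" using assms by simp
      moreover have "image_mset \<kappa> (mset_set V) = m" using k by (simp add: cols_def)
      ultimately show "\<kappa> x \<in> set_mset m" by metis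
    next
      fix x assume "x \<notin> V" then show "\<kappa> x = undefined" using k by (auto simp: cols_def PiE_def extensional_def)
    qed
  qed
qed (use assms in auto)

lemma csf_cs:
  assumes "\<And>x y. adj G x y \<Longrightarrow> x \<in> verts G \<and> y \<in> verts G"
  shows "csf G = cs (verts G) (adj G)"
proof
  fix m
  have "{\<kappa>. proper_coloring G \<kappa> \<and> image_mset \<kappa> (mset_set (verts G)) = m} = cols (verts G) (adj G) m"
    unfolding cols_def proper_coloring_def
  proof (intro Collect_cong iffI)
    fix \<kappa>
    assume h: "(\<kappa> \<in> verts G \<rightarrow>\<^sub>E {1..} \<and> (\<forall>e\<in>edges G. \<forall>x\<in>e. \<forall>y\<in>e. x \<noteq> y \<longrightarrow> \<kappa> x \<noteq> \<kappa> y)) \<and>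
         image_mset \<kappa> (mset_set (verts G)) = m"
    have "\<forall>x\<in>verts G. \<forall>y\<in>verts G. adj G x y \<longrightarrow> \<kappa> x \<noteq> \<kappa> y"
      using h unfolding adj_def by blast
    then show "\<kappa> \<in> verts G \<rightarrow>\<^sub>E {1..} \<and> (\<forall>x\<in>verts G. \<forall>y\<in>verts G. adj G x y \<longrightarrow> \<kappa> x \<noteq> \<kappa> y) \<and>
         image_mset \<kappa> (mset_set (verts G)) = m" using h by blast
  next
    fix \<kappa>
    assume h: "\<kappa> \<in> verts G \<rightarrow>\<^sub>E {1..} \<and> (\<forall>x\<in>verts G. \<forall>y\<in>verts G. adj G x y \<longrightarrow> \<kappa> x \<noteq> \<kappa> y) \<and>
         image_mset \<kappa> (mset_set (verts G)) = m"
    have "\<forall>e\<in>edges G. \<forall>x\<in>e. \<forall>y\<in>e. x \<noteq> y \<longrightarrow> \<kappa> x \<noteq> \<kappa> y"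
    proof (intro ballI impI)
      fix e x y assume "e \<in> edges G" "x \<in> e" "y \<in> e" "x \<noteq> y"
      then have "adj G x y" unfolding adj_def by blast
      then show "\<kappa> x \<noteq> \<kappa> y" using h assms by blast
    qed
    then show "(\<kappa> \<in> verts G \<rightarrow>\<^sub>E {1..} \<and> (\<forall>e\<in>edges G. \<forall>x\<in>e. \<forall>y\<in>e. x \<noteq> y \<longrightarrow> \<kappa> x \<noteq> \<kappa> y)) \<and>
         image_mset \<kappa> (mset_set (verts G)) = m"
      using h by blast
  qed
  then show "csf G m = cs (verts G) (adj G) m" unfolding csf_def cs_def by simp
qed

lemma cs_cong: "(\<And>x y. x \<in> V \<Longrightarrow> y \<in> V \<Longrightarrow> R x y = R' x y) \<Longrightarrow> cs V R = cs V R'"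
  unfolding cs_def cols_def by (intro ext arg_cong[where f="\<lambda>S. int (card S)"]) auto

lemma cs_iso_le:
  assumes fin: "finite V1" and bij: "bij_betw f V1 V2"
    and R: "\<And>x y. x \<in> V1 \<Longrightarrow> y \<in> V1 \<Longrightarrow> R1 x y = R2 (f x) (f y)"
  shows "card (cols V2 R2 m) \<le> card (cols V1 R1 m)"
proof (rule card_inj_on_le[where f="\<lambda>\<kappa>. restrict (\<kappa> \<circ> f) V1"])
  show "finite (cols V1 R1 m)" using fin by (rule finite_cols)
  have fV: "f ` V1 = V2" and inj: "inj_on f V1" using bij by (auto simp: bij_betw_def)
  show "inj_on (\<lambda>\<kappa>. restrict (\<kappa> \<circ> f) V1) (cols V2 R2 m)"
  proof (rule inj_onI)
    fix \<kappa> \<kappa>' assume k: "\<kappa> \<in> cols V2 R2 m" "\<kappa>' \<in> cols V2 R2 m"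
      and eq: "restrict (\<kappa> \<circ> f) V1 = restrict (\<kappa>' \<circ> f) V1"
    show "\<kappa> = \<kappa>'"
    proof
      fix y show "\<kappa> y = \<kappa>' y"
      proof (cases "y \<in> V2")
        case True
        then obtain x where "x \<in> V1" "y = f x" using fV by auto
        then show ?thesis using fun_cong[OF eq, of x] by simp
      next
        case False then show ?thesis using k by (auto simp: cols_def PiE_def extensional_def)
      qed
    qed
  qed
  show "(\<lambda>\<kappa>. restrict (\<kappa> \<circ> f) V1) ` cols V2 R2 m \<subseteq> cols V1 R1 m"
  proof
    fix lam assume "lam \<in> (\<lambda>\<kappa>. restrict (\<kappa> \<circ> f) V1) ` cols V2 R2 m"
    then obtain \<kappa> where k: "\<kappa> \<in> cols V2 R2 m" and l: "lam = restrict (\<kappa> \<circ> f) V1" by blast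
    have "lam \<in> V1 \<rightarrow>\<^sub>E {1..}" using k fV unfolding l cols_def by auto
    moreover have "\<forall>x\<in>V1. \<forall>y\<in>V1. R1 x y \<longrightarrow> lam x \<noteq> lam y" using k fV R unfolding l cols_def by auto
    moreover have "image_mset lam (mset_set V1) = image_mset (\<kappa> \<circ> f) (mset_set V1)"
      unfolding l by (rule image_mset_cong) (use fin in simp)
    moreover have "\<dots> = image_mset \<kappa> (image_mset f (mset_set V1))" by (simp add: multiset.map_comp)
    moreover have "image_mset f (mset_set V1) = mset_set V2" using image_mset_mset_set[OF inj] fV by simp
    ultimately show "lam \<in> cols V1 R1 m" using k unfolding cols_def by auto
  qed
qed

lemma cs_iso:
  assumes fin: "finite V1" and bij: "bij_betw f V1 V2"
    and R: "\<And>x y. x \<in> V1 \<Longrightarrow> y \<in> V1 \<Longrightarrow> R1 x y = R2 (f x) (f y)"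
  shows "cs V1 R1 = cs V2 R2"
proof
  fix m
  have fin2: "finite V2" using fin bij bij_betw_finite by blast
  have 1: "card (cols V2 R2 m) \<le> card (cols V1 R1 m)" by (rule cs_iso_le[OF fin bij]) (rule R)
  have bij2: "bij_betw (inv_into V1 f) V2 V1" using bij by (rule bij_betw_inv_into)
  have R': "R2 x y = R1 (inv_into V1 f x) (inv_into V1 f y)" if "x \<in> V2" "y \<in> V2" for x y
  proof -
    have "inv_into V1 f x \<in> V1" "inv_into V1 f y \<in> V1" using bij2 that by (auto simp: bij_betw_def)
    moreover have "f (inv_into V1 f x) = x" "f (inv_into V1 f y) = y"
      using that bij by (auto simp: bij_betw_def f_inv_into_f)
    ultimately show ?thesis using R by metis
  qed
  have 2: "card (cols V1 R1 m) \<le> card (cols V2 R2 m)" by (rule cs_iso_le[OF fin2 bij2]) (rule R')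
  show "cs V1 R1 m = cs V2 R2 m" unfolding cs_def using 1 2 by simp
qed


lemma cols_restrict:
  assumes "\<kappa> \<in> cols V R m" "V1 \<subseteq> V" "finite V"
  shows "restrict \<kappa> V1 \<in> cols V1 R (image_mset \<kappa> (mset_set V1))"
proof -
  have fin1: "finite V1" using assms finite_subset by blast
  have "image_mset (restrict \<kappa> V1) (mset_set V1) = image_mset \<kappa> (mset_set V1)"
    by (rule image_mset_cong) (use fin1 in simp)
  then show ?thesis using assms unfolding cols_def by auto
qed

lemma cs_union:
  assumes f1: "finite V1" and f2: "finite V2" and disj: "V1 \<inter> V2 = {}"
    and R: "\<And>x y. x \<in> V1 \<union> V2 \<Longrightarrow> y \<in> V1 \<union> V2 \<Longrightarrow> R x y \<Longrightarrow> (x \<in> V1 \<longleftrightarrow> y \<in> V1)"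
  shows "cs (V1 \<union> V2) R m = sf_times (cs V1 R) (cs V2 R) m"
proof -
  let ?S = "cols (V1 \<union> V2) R m"
  let ?F = "\<lambda>\<kappa>. (restrict \<kappa> V1, restrict \<kappa> V2)"
  let ?I = "{A. A \<subseteq># m}"
  let ?U = "\<Union>A\<in>?I. cols V1 R A \<times> cols V2 R (m - A)"
  have fU: "finite (V1 \<union> V2)" using f1 f2 by simp
  have msU: "mset_set (V1 \<union> V2) = mset_set V1 + mset_set V2" using mset_set_Union[OF f1 f2 disj] .
  have "bij_betw ?F ?S ?U"
  proof (rule bij_betw_imageI)
    show "inj_on ?F ?S"
    proof (rule inj_onI)
      fix \<kappa> \<kappa>' assume k: "\<kappa> \<in> ?S" "\<kappa>' \<in> ?S" and eq: "?F \<kappa> = ?F \<kappa>'"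
      show "\<kappa> = \<kappa>'"
      proof
        fix x show "\<kappa> x = \<kappa>' x"
        proof (cases "x \<in> V1 \<union> V2")
          case True then show ?thesis using eq
            by (metis Un_iff prod.inject restrict_apply')
        next
          case False then show ?thesis using k by (auto simp: cols_def PiE_def extensional_def)
        qed
      qed
    qed
    show "?F ` ?S = ?U"
    proof
      show "?F ` ?S \<subseteq> ?U"
      proof
        fix p assume "p \<in> ?F ` ?S"
        then obtain \<kappa> where k: "\<kappa> \<in> ?S" and p: "p = ?F \<kappa>" by blast
        let ?A = "image_mset \<kappa> (mset_set V1)"
        have m: "m = ?A + image_mset \<kappa> (mset_set V2)" using k msU by (simp add: cols_def)
        have "?A \<in> ?I" using m by simp
        moreover have "restrict \<kappa> V1 \<in> cols V1 R ?A" by (rule cols_restrict[OF k _ fU]) simp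
        moreover have "restrict \<kappa> V2 \<in> cols V2 R (m - ?A)"
          using cols_restrict[OF k _ fU, of V2] m by simp
        ultimately show "p \<in> ?U" unfolding p by blast
      qed
      show "?U \<subseteq> ?F ` ?S"
      proof
        fix p assume "p \<in> ?U"
        then obtain A k1 k2 where A: "A \<subseteq># m" and k1: "k1 \<in> cols V1 R A" and k2: "k2 \<in> cols V2 R (m - A)"
          and p: "p = (k1, k2)" by blast
        define \<kappa> where "\<kappa> = (\<lambda>x. if x \<in> V1 then k1 x else k2 x)"
        have r1: "restrict \<kappa> V1 = k1"
          by (intro ext) (use k1 in \<open>auto simp: \<kappa>_def cols_def PiE_def extensional_def restrict_def\<close>)
        have r2: "restrict \<kappa> V2 = k2"
          by (intro ext) (use k2 disj in \<open>auto simp: \<kappa>_def cols_def PiE_def extensional_def restrict_def\<close>)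
        have e1: "image_mset \<kappa> (mset_set V1) = A"
        proof -
          have "image_mset \<kappa> (mset_set V1) = image_mset k1 (mset_set V1)"
            by (rule image_mset_cong) (use f1 in \<open>simp add: \<kappa>_def\<close>)
          then show ?thesis using k1 by (simp add: cols_def)
        qed
        have e2: "image_mset \<kappa> (mset_set V2) = m - A"
        proof -
          have "image_mset \<kappa> (mset_set V2) = image_mset k2 (mset_set V2)"
            by (rule image_mset_cong) (use f2 disj in \<open>auto simp add: \<kappa>_def\<close>)
          then show ?thesis using k2 by (simp add: cols_def)
        qed
        have "\<kappa> \<in> ?S"
        proof -
          have "\<kappa> \<in> (V1 \<union> V2) \<rightarrow>\<^sub>E {1..}"
            using k1 k2 by (auto simp: \<kappa>_def cols_def PiE_def extensional_def)
          moreover have "\<forall>x\<in>V1 \<union> V2. \<forall>y\<in>V1 \<union> V2. R x y \<longrightarrow> \<kappa> x \<noteq> \<kappa> y"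
          proof (intro ballI impI)
            fix x y assume xy: "x \<in> V1 \<union> V2" "y \<in> V1 \<union> V2" and r: "R x y"
            have c: "x \<in> V1 \<longleftrightarrow> y \<in> V1" using R[OF xy r] .
            show "\<kappa> x \<noteq> \<kappa> y"
            proof (cases "x \<in> V1")
              case True then show ?thesis using c k1 r by (auto simp: \<kappa>_def cols_def)
            next
              case False then show ?thesis using c k2 r xy by (auto simp: \<kappa>_def cols_def)
            qed
          qed
          moreover have "image_mset \<kappa> (mset_set (V1 \<union> V2)) = m"
            using msU e1 e2 A by (simp add: subset_mset.add_diff_inverse)
          ultimately show ?thesis unfolding cols_def by blast
        qed
        then show "p \<in> ?F ` ?S" unfolding p using r1 r2 by force
      qed
    qed
  qed
  then have "card ?S = card ?U" by (rule bij_betw_same_card)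
  also have "card ?U = (\<Sum>A\<in>?I. card (cols V1 R A \<times> cols V2 R (m - A)))"
  proof (rule card_UN_disjoint)
    show "finite ?I" by (rule finite_msubsets)
    show "\<forall>A\<in>?I. finite (cols V1 R A \<times> cols V2 R (m - A))"
      using finite_cols[OF f1] finite_cols[OF f2] by blast
    show "\<forall>A\<in>?I. \<forall>B\<in>?I. A \<noteq> B \<longrightarrow> (cols V1 R A \<times> cols V2 R (m - A)) \<inter> (cols V1 R B \<times> cols V2 R (m - B)) = {}"
      by (auto simp: cols_def)
  qed
  also have "\<dots> = (\<Sum>A\<in>?I. card (cols V1 R A) * card (cols V2 R (m - A)))"
    by (simp add: card_cartesian_product)
  finally show ?thesis unfolding cs_def sf_times_def by simp
qed

definition E2 :: "'a \<Rightarrow> 'a \<Rightarrow> 'a \<Rightarrow> 'a \<Rightarrow> bool" where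
  "E2 p q x y \<longleftrightarrow> (x = p \<and> y = q \<or> x = q \<and> y = p)"

lemma cols_E2:
  assumes "p \<in> V" "q \<in> V"
  shows "cols V (\<lambda>x y. R x y \<or> E2 p q x y) m = {\<kappa>\<in>cols V R m. \<kappa> p \<noteq> \<kappa> q}"
  using assms unfolding cols_def E2_def by auto

lemma card_split: "finite A \<Longrightarrow> card {x\<in>A. P x} = card {x\<in>A. P x \<and> Q x} + card {x\<in>A. P x \<and> \<not> Q x}"
proof -
  assume f: "finite A"
  have "{x\<in>A. P x} = {x\<in>A. P x \<and> Q x} \<union> {x\<in>A. P x \<and> \<not> Q x}" by auto
  moreover have "card ({x\<in>A. P x \<and> Q x} \<union> {x\<in>A. P x \<and> \<not> Q x}) = card {x\<in>A. P x \<and> Q x} + card {x\<in>A. P x \<and> \<not> Q x}"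
    by (rule card_Un_disjoint) (use f in auto)
  ultimately show ?thesis by simp
qed

lemma cs_triple:
  assumes fin: "finite V" and V: "a \<in> V" "b \<in> V" "c \<in> V"
  shows "cs V (\<lambda>x y. (R x y \<or> E2 c a x y) \<or> E2 c b x y) m + cs V (\<lambda>x y. R x y \<or> E2 a b x y) m
       = cs V (\<lambda>x y. (R x y \<or> E2 c a x y) \<or> E2 a b x y) m + cs V (\<lambda>x y. R x y \<or> E2 c b x y) m"
proof -
  let ?Q = "cols V R m"
  have fQ: "finite ?Q" using fin by (rule finite_cols)
  have X1: "cols V (\<lambda>x y. (R x y \<or> E2 c a x y) \<or> E2 c b x y) m = {\<kappa>\<in>?Q. \<kappa> c \<noteq> \<kappa> b \<and> \<kappa> c \<noteq> \<kappa> a}"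
    apply (subst cols_E2[OF V(3) V(2)]) apply (subst cols_E2[OF V(3) V(1)]) by auto
  have X3: "cols V (\<lambda>x y. (R x y \<or> E2 c a x y) \<or> E2 a b x y) m = {\<kappa>\<in>?Q. \<kappa> a \<noteq> \<kappa> b \<and> \<kappa> c \<noteq> \<kappa> a}"
    apply (subst cols_E2[OF V(1) V(2)]) apply (subst cols_E2[OF V(3) V(1)]) by auto
  have X2: "cols V (\<lambda>x y. R x y \<or> E2 a b x y) m = {\<kappa>\<in>?Q. \<kappa> a \<noteq> \<kappa> b}"
    using V by (auto simp: cols_E2)
  have X4: "cols V (\<lambda>x y. R x y \<or> E2 c b x y) m = {\<kappa>\<in>?Q. \<kappa> c \<noteq> \<kappa> b}"
    using V by (auto simp: cols_E2)
  have s4: "card {\<kappa>\<in>?Q. \<kappa> c \<noteq> \<kappa> b} = card {\<kappa>\<in>?Q. \<kappa> c \<noteq> \<kappa> b \<and> \<kappa> c \<noteq> \<kappa> a} + card {\<kappa>\<in>?Q. \<kappa> c \<noteq> \<kappa> b \<and> \<not> \<kappa> c \<noteq> \<kappa> a}"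
    by (rule card_split[OF fQ])
  have s2: "card {\<kappa>\<in>?Q. \<kappa> a \<noteq> \<kappa> b} = card {\<kappa>\<in>?Q. \<kappa> a \<noteq> \<kappa> b \<and> \<kappa> c \<noteq> \<kappa> a} + card {\<kappa>\<in>?Q. \<kappa> a \<noteq> \<kappa> b \<and> \<not> \<kappa> c \<noteq> \<kappa> a}"
    by (rule card_split[OF fQ])
  have eq: "{\<kappa>\<in>?Q. \<kappa> c \<noteq> \<kappa> b \<and> \<not> \<kappa> c \<noteq> \<kappa> a} = {\<kappa>\<in>?Q. \<kappa> a \<noteq> \<kappa> b \<and> \<not> \<kappa> c \<noteq> \<kappa> a}" by auto
  show ?thesis unfolding cs_def X1 X2 X3 X4 using s4 s2 eq by simp
qed


lemma verts_gmap[simp]: "verts (gmap f G) = f ` verts G" by (simp add: gmap_def verts_def)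
lemma edges_gmap[simp]: "edges (gmap f G) = (\<lambda>e. f ` e) ` edges G" by (simp add: gmap_def edges_def)

lemma adj_gmap: "adj (gmap f G) p q \<longleftrightarrow> (\<exists>x y. adj G x y \<and> p = f x \<and> q = f y \<and> p \<noteq> q)"
  unfolding adj_def by auto

definition dbl :: "'a graph \<Rightarrow> bool" where "dbl G \<longleftrightarrow> (\<forall>e\<in>edges G. \<exists>x y. e = {x, y})"

lemma adj_dbl: "dbl G \<Longrightarrow> adj G x y \<longleftrightarrow> {x, y} \<in> edges G \<and> x \<noteq> y"
proof
  assume d: "dbl G" and "adj G x y"
  then obtain e where e: "e \<in> edges G" "x \<in> e" "y \<in> e" "x \<noteq> y" unfolding adj_def by blast
  then obtain p q where "e = {p, q}" using d unfolding dbl_def by blast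
  then have "e = {x, y}" using e by auto
  then show "{x, y} \<in> edges G \<and> x \<noteq> y" using e by simp
next
  assume "{x, y} \<in> edges G \<and> x \<noteq> y"
  then show "adj G x y" unfolding adj_def by blast
qed

lemma dbl_gmap: "dbl G \<Longrightarrow> dbl (gmap f G)"
  unfolding dbl_def edges_gmap
proof
  fix e' assume a: "\<forall>e\<in>edges G. \<exists>x y. e = {x, y}" and b: "e' \<in> (\<lambda>e. f ` e) ` edges G"
  from b obtain e where e: "e \<in> edges G" "e' = f ` e" by auto
  then obtain x y where "e = {x, y}" using a by meson
  then have "e' = f ` {x, y}" using e by simp
  then have "e' = {f x, f y}" by simp
  then show "\<exists>x y. e' = {x, y}" by blast
qed

lemma wf_dbl: "wf_graph G \<Longrightarrow> dbl G"
  unfolding wf_graph_def dbl_def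
proof (intro ballI)
  fix e assume "finite (verts G) \<and> (\<forall>e\<in>edges G. e \<subseteq> verts G \<and> card e = 2)" "e \<in> edges G"
  then have "card e = 2" by blast
  then show "\<exists>x y. e = {x, y}" unfolding card_2_iff by blast
qed

definition closed :: "'a graph \<Rightarrow> bool" where
  "closed G \<longleftrightarrow> (\<forall>x y. adj G x y \<longrightarrow> x \<in> verts G \<and> y \<in> verts G)"

lemma wf_closed: "wf_graph G \<Longrightarrow> closed G"
  unfolding wf_graph_def closed_def adj_def by blast

lemma closed_gmap: "closed G \<Longrightarrow> closed (gmap f G)"
  unfolding closed_def adj_gmap by auto

lemma csf_closed: "closed G \<Longrightarrow> csf G = cs (verts G) (adj G)"
  by (rule csf_cs) (auto simp: closed_def)

lemma rmap_simps[simp]: "fst (rmap f Gu) = gmap f (fst Gu)" "snd (rmap f Gu) = f (snd Gu)"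
  by (auto simp: rmap_def)


lemma verts_spider: "verts (spider \<tau> Gs) = insert spider_center (spider_glue \<tau> Gs ` verts (spider_base \<tau> Gs))"
  by (simp add: spider_def Let_def verts_def gmap_def)

lemma edges_spider: "edges (spider \<tau> Gs) = edges (gmap (spider_glue \<tau> Gs) (spider_base \<tau> Gs))"
  by (simp add: spider_def Let_def edges_def)

lemma adj_spider: "adj (spider \<tau> Gs) p q \<longleftrightarrow>
   (\<exists>x y. adj (spider_base \<tau> Gs) x y \<and> p = spider_glue \<tau> Gs x \<and> q = spider_glue \<tau> Gs y \<and> p \<noteq> q)"
proof -
  have "adj (spider \<tau> Gs) p q = adj (gmap (spider_glue \<tau> Gs) (spider_base \<tau> Gs)) p q"
    unfolding adj_def edges_spider ..
  then show ?thesis by (simp add: adj_gmap)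
qed

lemma verts_spider_base: "x \<in> verts (spider_base \<tau> Gs) \<longleftrightarrow>
   (\<exists>i x0. x = Inl (i, x0) \<and> i < length Gs \<and> x0 \<in> verts (fst (Gs ! i))) \<or>
   (\<exists>i j. x = Inr (i, j) \<and> i < length Gs \<and> j \<le> \<tau> ! i)"
  by (auto simp: spider_base_def verts_def)

lemma adj_spider_base:
  assumes "\<And>i. i < length Gs \<Longrightarrow> dbl (fst (Gs ! i))"
  shows "adj (spider_base \<tau> Gs) x y \<longleftrightarrow>
   (\<exists>i x0 y0. i < length Gs \<and> adj (fst (Gs ! i)) x0 y0 \<and> x = Inl (i, x0) \<and> y = Inl (i, y0)) \<or>
   (\<exists>i j. i < length Gs \<and> j < \<tau> ! i \<and> (x = Inr (i, j) \<and> y = Inr (i, Suc j) \<or> x = Inr (i, Suc j) \<and> y = Inr (i, j)))"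
proof
  assume "adj (spider_base \<tau> Gs) x y"
  then obtain e where e: "e \<in> edges (spider_base \<tau> Gs)" "x \<in> e" "y \<in> e" "x \<noteq> y" unfolding adj_def by blast
  from e(1) consider
      (g) i x0 y0 where "e = {Inl (i, x0), Inl (i, y0)}" "i < length Gs" "{x0, y0} \<in> edges (fst (Gs ! i))"
    | (p) i j where "e = {Inr (i, j), Inr (i, Suc j)}" "i < length Gs" "j < \<tau> ! i"
    unfolding spider_base_def edges_def by auto
  then show "(\<exists>i x0 y0. i < length Gs \<and> adj (fst (Gs ! i)) x0 y0 \<and> x = Inl (i, x0) \<and> y = Inl (i, y0)) \<or>
   (\<exists>i j. i < length Gs \<and> j < \<tau> ! i \<and> (x = Inr (i, j) \<and> y = Inr (i, Suc j) \<or> x = Inr (i, Suc j) \<and> y = Inr (i, j)))"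
  proof cases
    case g
    then have "adj (fst (Gs ! i)) x0 y0" "adj (fst (Gs ! i)) y0 x0" using e unfolding adj_def by auto
    then show ?thesis using g e by auto
  next
    case p then show ?thesis using e by auto
  qed
next
  assume "(\<exists>i x0 y0. i < length Gs \<and> adj (fst (Gs ! i)) x0 y0 \<and> x = Inl (i, x0) \<and> y = Inl (i, y0)) \<or>
   (\<exists>i j. i < length Gs \<and> j < \<tau> ! i \<and> (x = Inr (i, j) \<and> y = Inr (i, Suc j) \<or> x = Inr (i, Suc j) \<and> y = Inr (i, j)))"
  then show "adj (spider_base \<tau> Gs) x y"
  proof (elim disjE exE conjE)
    fix i x0 y0 assume h: "i < length Gs" "adj (fst (Gs ! i)) x0 y0" "x = Inl (i, x0)" "y = Inl (i, y0)"
    have "dbl (fst (Gs ! i))" using assms h(1) .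
    then have "{x0, y0} \<in> edges (fst (Gs ! i)) \<and> x0 \<noteq> y0" using adj_dbl[of "fst (Gs ! i)" x0 y0] h(2) by simp
    then have "{x0, y0} \<in> edges (fst (Gs ! i))" "x0 \<noteq> y0" by auto
    then have "{x, y} \<in> edges (spider_base \<tau> Gs)" using h unfolding spider_base_def edges_def by auto
    then show ?thesis using h \<open>x0 \<noteq> y0\<close> unfolding adj_def by auto
  next
    fix i j assume h: "i < length Gs" "j < \<tau> ! i" "x = Inr (i, j)" "y = Inr (i, Suc j)"
    then have "{x, y} \<in> edges (spider_base \<tau> Gs)" unfolding spider_base_def edges_def by auto
    then show ?thesis using h unfolding adj_def by auto
  next
    fix i j assume h: "i < length Gs" "j < \<tau> ! i" "x = Inr (i, Suc j)" "y = Inr (i, j)"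
    then have "{y, x} \<in> edges (spider_base \<tau> Gs)" unfolding spider_base_def edges_def by auto
    then show ?thesis using h unfolding adj_def by auto
  qed
qed

lemma dbl_spider_base: "(\<And>i. i < length Gs \<Longrightarrow> dbl (fst (Gs ! i))) \<Longrightarrow> dbl (spider_base \<tau> Gs)"
  unfolding dbl_def spider_base_def edges_def by auto

lemma dbl_spider: "(\<And>i. i < length Gs \<Longrightarrow> dbl (fst (Gs ! i))) \<Longrightarrow> dbl (spider \<tau> Gs)"
proof -
  assume "\<And>i. i < length Gs \<Longrightarrow> dbl (fst (Gs ! i))"
  then have "dbl (gmap (spider_glue \<tau> Gs) (spider_base \<tau> Gs))" by (intro dbl_gmap dbl_spider_base)
  then show ?thesis unfolding dbl_def edges_spider .
qed

lemma closed_spider_base: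
  assumes d: "\<And>i. i < length Gs \<Longrightarrow> dbl (fst (Gs ! i))" and c: "\<And>i. i < length Gs \<Longrightarrow> closed (fst (Gs ! i))"
  shows "closed (spider_base \<tau> Gs)"
  unfolding closed_def
proof (intro allI impI)
  fix x y assume "adj (spider_base \<tau> Gs) x y"
  then have "(\<exists>i x0 y0. i < length Gs \<and> adj (fst (Gs ! i)) x0 y0 \<and> x = Inl (i, x0) \<and> y = Inl (i, y0)) \<or>
   (\<exists>i j. i < length Gs \<and> j < \<tau> ! i \<and> (x = Inr (i, j) \<and> y = Inr (i, Suc j) \<or> x = Inr (i, Suc j) \<and> y = Inr (i, j)))"
    by (simp only: adj_spider_base[OF d])
  then show "x \<in> verts (spider_base \<tau> Gs) \<and> y \<in> verts (spider_base \<tau> Gs)"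
  proof (elim disjE exE conjE)
    fix i x0 y0 assume h: "i < length Gs" "adj (fst (Gs ! i)) x0 y0" "x = Inl (i, x0)" "y = Inl (i, y0)"
    have "x0 \<in> verts (fst (Gs ! i)) \<and> y0 \<in> verts (fst (Gs ! i))" using c[OF h(1)] h(2) unfolding closed_def by blast
    then show ?thesis using h unfolding verts_spider_base by blast
  qed (auto simp: verts_spider_base)
qed

lemma closed_spider:
  assumes "\<And>i. i < length Gs \<Longrightarrow> dbl (fst (Gs ! i))" "\<And>i. i < length Gs \<Longrightarrow> closed (fst (Gs ! i))"
  shows "closed (spider \<tau> Gs)"
proof -
  have "closed (spider_base \<tau> Gs)" by (rule closed_spider_base[OF assms])
  then show ?thesis unfolding closed_def adj_spider verts_spider by blast
qed

lemma finite_spider_base: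
  assumes "\<And>i. i < length Gs \<Longrightarrow> finite (verts (fst (Gs ! i)))" and len: "length \<tau> = length Gs"
  shows "finite (verts (spider_base \<tau> Gs))"
proof -
  have "verts (spider_base \<tau> Gs) \<subseteq> (\<lambda>(i, x). Inl (i, x)) ` (SIGMA i:{..<length Gs}. verts (fst (Gs ! i)))
      \<union> (\<lambda>(i, j). Inr (i, j)) ` ({..<length Gs} \<times> {..Max (insert 0 (set \<tau>))})"
  proof
    fix x assume "x \<in> verts (spider_base \<tau> Gs)"
    then show "x \<in> (\<lambda>(i, x). Inl (i, x)) ` (SIGMA i:{..<length Gs}. verts (fst (Gs ! i)))
      \<union> (\<lambda>(i, j). Inr (i, j)) ` ({..<length Gs} \<times> {..Max (insert 0 (set \<tau>))})"
      unfolding verts_spider_base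
    proof (elim disjE exE conjE)
      fix i j assume h: "x = Inr (i, j)" "i < length Gs" "j \<le> \<tau> ! i"
      show ?thesis
      proof (cases "i < length \<tau>")
        case True
        then have "\<tau> ! i \<le> Max (insert 0 (set \<tau>))" by simp
        then show ?thesis using h by force
      next
        case False
        then show ?thesis using h len by simp
      qed
    qed force
  qed
  moreover have "finite ((\<lambda>(i, x). Inl (i, x)) ` (SIGMA i:{..<length Gs}. verts (fst (Gs ! i)))
      \<union> (\<lambda>(i, j). Inr (i, j)) ` ({..<length Gs} \<times> {..Max (insert 0 (set \<tau>))}))"
    using assms(1) by (intro finite_UnI finite_imageI finite_SigmaI finite_cartesian_product) auto
  ultimately show ?thesis by (rule finite_subset)
qed


lemma verts_Pk: "verts (Pk k Gu Hv) = path_glue k Gu Hv ` verts (path_base k Gu Hv)"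
  by (simp add: Pk_def)

lemma adj_Pk: "adj (Pk k Gu Hv) p q \<longleftrightarrow>
   (\<exists>x y. adj (path_base k Gu Hv) x y \<and> p = path_glue k Gu Hv x \<and> q = path_glue k Gu Hv y \<and> p \<noteq> q)"
  unfolding Pk_def by (rule adj_gmap)

lemma verts_path_base: "x \<in> verts (path_base k Gu Hv) \<longleftrightarrow>
   (\<exists>x0. x = Inl (0, x0) \<and> x0 \<in> verts (fst Gu)) \<or> (\<exists>x0. x = Inl (1, x0) \<and> x0 \<in> verts (fst Hv)) \<or>
   (\<exists>j. x = Inr (0, j) \<and> j \<le> k)"
  by (auto simp: path_base_def verts_def)

lemma adj_path_base:
  assumes d1: "dbl (fst Gu)" and d2: "dbl (fst Hv)"
  shows "adj (path_base k Gu Hv) x y \<longleftrightarrow>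
   (\<exists>x0 y0. adj (fst Gu) x0 y0 \<and> x = Inl (0, x0) \<and> y = Inl (0, y0)) \<or>
   (\<exists>x0 y0. adj (fst Hv) x0 y0 \<and> x = Inl (1, x0) \<and> y = Inl (1, y0)) \<or>
   (\<exists>j. j < k \<and> (x = Inr (0, j) \<and> y = Inr (0, Suc j) \<or> x = Inr (0, Suc j) \<and> y = Inr (0, j)))"
proof
  assume "adj (path_base k Gu Hv) x y"
  then obtain e where e: "e \<in> edges (path_base k Gu Hv)" "x \<in> e" "y \<in> e" "x \<noteq> y" unfolding adj_def by blast
  from e(1) consider
      (g) x0 y0 where "e = {Inl (0, x0), Inl (0, y0)}" "{x0, y0} \<in> edges (fst Gu)"
    | (h) x0 y0 where "e = {Inl (1, x0), Inl (1, y0)}" "{x0, y0} \<in> edges (fst Hv)"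
    | (p) j where "e = {Inr (0, j), Inr (0, Suc j)}" "j < k"
    unfolding path_base_def edges_def by auto
  then show "(\<exists>x0 y0. adj (fst Gu) x0 y0 \<and> x = Inl (0, x0) \<and> y = Inl (0, y0)) \<or>
   (\<exists>x0 y0. adj (fst Hv) x0 y0 \<and> x = Inl (1, x0) \<and> y = Inl (1, y0)) \<or>
   (\<exists>j. j < k \<and> (x = Inr (0, j) \<and> y = Inr (0, Suc j) \<or> x = Inr (0, Suc j) \<and> y = Inr (0, j)))"
  proof cases
    case g
    then have "adj (fst Gu) x0 y0" "adj (fst Gu) y0 x0" using e unfolding adj_def by auto
    then show ?thesis using g e by auto
  next
    case h
    then have "adj (fst Hv) x0 y0" "adj (fst Hv) y0 x0" using e unfolding adj_def by auto
    then show ?thesis using h e by auto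
  next
    case p then show ?thesis using e by auto
  qed
next
  assume "(\<exists>x0 y0. adj (fst Gu) x0 y0 \<and> x = Inl (0, x0) \<and> y = Inl (0, y0)) \<or>
   (\<exists>x0 y0. adj (fst Hv) x0 y0 \<and> x = Inl (1, x0) \<and> y = Inl (1, y0)) \<or>
   (\<exists>j. j < k \<and> (x = Inr (0, j) \<and> y = Inr (0, Suc j) \<or> x = Inr (0, Suc j) \<and> y = Inr (0, j)))"
  then show "adj (path_base k Gu Hv) x y"
  proof (elim disjE exE conjE)
    fix x0 y0 assume h: "adj (fst Gu) x0 y0" "x = Inl (0, x0)" "y = Inl (0, y0)"
    then have "{x0, y0} \<in> edges (fst Gu) \<and> x0 \<noteq> y0" using adj_dbl[OF d1, of x0 y0] by simp
    then have "{x, y} \<in> edges (path_base k Gu Hv)" "x \<noteq> y" using h unfolding path_base_def edges_def by auto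
    then show ?thesis unfolding adj_def by auto
  next
    fix x0 y0 assume h: "adj (fst Hv) x0 y0" "x = Inl (1, x0)" "y = Inl (1, y0)"
    then have "{x0, y0} \<in> edges (fst Hv) \<and> x0 \<noteq> y0" using adj_dbl[OF d2, of x0 y0] by simp
    then have "{x, y} \<in> edges (path_base k Gu Hv)" "x \<noteq> y" using h unfolding path_base_def edges_def by auto
    then show ?thesis unfolding adj_def by auto
  next
    fix j assume h: "j < k" "x = Inr (0, j)" "y = Inr (0, Suc j)"
    then have "{x, y} \<in> edges (path_base k Gu Hv)" unfolding path_base_def edges_def by auto
    then show ?thesis using h unfolding adj_def by auto
  next
    fix j assume h: "j < k" "x = Inr (0, Suc j)" "y = Inr (0, j)"
    then have "{y, x} \<in> edges (path_base k Gu Hv)" unfolding path_base_def edges_def by auto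
    then show ?thesis using h unfolding adj_def by auto
  qed
qed

lemma dbl_Pk: "dbl (fst Gu) \<Longrightarrow> dbl (fst Hv) \<Longrightarrow> dbl (Pk k Gu Hv)"
  unfolding Pk_def by (rule dbl_gmap) (auto simp: dbl_def path_base_def edges_def)

lemma closed_Pk:
  assumes d: "dbl (fst Gu)" "dbl (fst Hv)" and c: "closed (fst Gu)" "closed (fst Hv)"
  shows "closed (Pk k Gu Hv)"
  unfolding Pk_def
proof (rule closed_gmap)
  show "closed (path_base k Gu Hv)" unfolding closed_def
  proof (intro allI impI)
    fix x y assume "adj (path_base k Gu Hv) x y"
    then have "(\<exists>x0 y0. adj (fst Gu) x0 y0 \<and> x = Inl (0, x0) \<and> y = Inl (0, y0)) \<or>
     (\<exists>x0 y0. adj (fst Hv) x0 y0 \<and> x = Inl (1, x0) \<and> y = Inl (1, y0)) \<or>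
     (\<exists>j. j < k \<and> (x = Inr (0, j) \<and> y = Inr (0, Suc j) \<or> x = Inr (0, Suc j) \<and> y = Inr (0, j)))"
      by (simp only: adj_path_base[OF d])
    then show "x \<in> verts (path_base k Gu Hv) \<and> y \<in> verts (path_base k Gu Hv)"
    proof (elim disjE exE conjE)
      fix x0 y0 assume h: "adj (fst Gu) x0 y0" "x = Inl (0, x0)" "y = Inl (0, y0)"
      then have "x0 \<in> verts (fst Gu) \<and> y0 \<in> verts (fst Gu)" using c(1) unfolding closed_def by blast
      then show ?thesis using h unfolding verts_path_base by blast
    next
      fix x0 y0 assume h: "adj (fst Hv) x0 y0" "x = Inl (1, x0)" "y = Inl (1, y0)"
      then have "x0 \<in> verts (fst Hv) \<and> y0 \<in> verts (fst Hv)" using c(2) unfolding closed_def by blast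
      then show ?thesis using h unfolding verts_path_base by blast
    qed (auto simp: verts_path_base)
  qed
qed

lemma finite_Pk:
  assumes "finite (verts (fst Gu))" "finite (verts (fst Hv))"
  shows "finite (verts (Pk k Gu Hv))"
proof -
  have "verts (path_base k Gu Hv) = (\<lambda>x. Inl (0, x)) ` verts (fst Gu) \<union> (\<lambda>x. Inl (1, x)) ` verts (fst Hv)
     \<union> (\<lambda>j. Inr (0, j)) ` {..k}"
    by (auto simp: path_base_def verts_def)
  then have "finite (verts (path_base k Gu Hv))" using assms by simp
  then show ?thesis unfolding verts_Pk by simp
qed

lemma wf_K1: "wf_rooted K1"
  by (simp add: K1_def wf_rooted_def wf_graph_def verts_def edges_def)


lemma verts_spider_char:
  assumes roots: "\<And>i. i < length Gs \<Longrightarrow> snd (Gs ! i) \<in> verts (fst (Gs ! i))"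
  shows "p \<in> verts (spider \<tau> Gs) \<longleftrightarrow> p = spider_center \<or>
    (\<exists>i x. p = Inl (i, x) \<and> i < length Gs \<and> x \<in> verts (fst (Gs ! i)) \<and> \<not> (x = snd (Gs ! i) \<and> \<tau> ! i = 0)) \<or>
    (\<exists>i j. p = Inr (i, j) \<and> i < length Gs \<and> 0 < j \<and> j < \<tau> ! i)"
proof
  assume "p \<in> verts (spider \<tau> Gs)"
  then have "p = spider_center \<or> (\<exists>x\<in>verts (spider_base \<tau> Gs). p = spider_glue \<tau> Gs x)"
    unfolding verts_spider by blast
  then show "p = spider_center \<or>
    (\<exists>i x. p = Inl (i, x) \<and> i < length Gs \<and> x \<in> verts (fst (Gs ! i)) \<and> \<not> (x = snd (Gs ! i) \<and> \<tau> ! i = 0)) \<or>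
    (\<exists>i j. p = Inr (i, j) \<and> i < length Gs \<and> 0 < j \<and> j < \<tau> ! i)"
  proof (elim disjE bexE)
    assume "p = spider_center" then show ?thesis by simp
  next
    fix x assume x: "x \<in> verts (spider_base \<tau> Gs)" and p: "p = spider_glue \<tau> Gs x"
    from x consider (l) i x0 where "x = Inl (i, x0)" "i < length Gs" "x0 \<in> verts (fst (Gs ! i))"
      | (r) i j where "x = Inr (i, j)" "i < length Gs" "j \<le> \<tau> ! i"
      unfolding verts_spider_base by blast
    then show ?thesis
    proof cases
      case l then show ?thesis using p by (cases "x0 = snd (Gs ! i) \<and> \<tau> ! i = 0") (auto simp: spider_center_def)
    next
      case r then show ?thesis using p roots[of i] by (cases "j = 0"; cases "j = \<tau> ! i") (auto simp: spider_center_def)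
    qed
  qed
next
  assume h: "p = spider_center \<or>
    (\<exists>i x. p = Inl (i, x) \<and> i < length Gs \<and> x \<in> verts (fst (Gs ! i)) \<and> \<not> (x = snd (Gs ! i) \<and> \<tau> ! i = 0)) \<or>
    (\<exists>i j. p = Inr (i, j) \<and> i < length Gs \<and> 0 < j \<and> j < \<tau> ! i)"
  show "p \<in> verts (spider \<tau> Gs)"
    unfolding verts_spider
  proof (cases "p = spider_center")
    case False
    then obtain x where "x \<in> verts (spider_base \<tau> Gs)" "p = spider_glue \<tau> Gs x"
    proof (cases p)
      case (Inl z)
      then obtain i x where "p = Inl (i, x)" "i < length Gs" "x \<in> verts (fst (Gs ! i))" "\<not> (x = snd (Gs ! i) \<and> \<tau> ! i = 0)"
        using h False by (auto simp: spider_center_def)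
      then show ?thesis using that[of "Inl (i, x)"] unfolding verts_spider_base by auto
    next
      case (Inr z)
      then obtain i j where "p = Inr (i, j)" "i < length Gs" "0 < j" "j < \<tau> ! i"
        using h False by (auto simp: spider_center_def)
      then show ?thesis using that[of "Inr (i, j)"] unfolding verts_spider_base by auto
    qed
    then show "p \<in> insert spider_center (spider_glue \<tau> Gs ` verts (spider_base \<tau> Gs))" by blast
  qed simp
qed

locale ctx =
  fixes \<tau> :: "nat list" and Gs :: "('a graph \<times> 'a) list"
  assumes len: "length \<tau> = length Gs" and l3: "length \<tau> \<ge> 3"
    and t0: "\<tau> ! 0 \<ge> 1" and t1: "\<tau> ! 1 \<ge> 1"
    and wfs: "\<forall>Gu\<in>set Gs. wf_rooted Gu"
begin

abbreviation "g \<equiv> spider_glue \<tau> Gs"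
abbreviation "GG \<equiv> spider \<tau> Gs"
abbreviation "V \<equiv> verts GG"
abbreviation "c \<equiv> (spider_center :: 'a svert)"
abbreviation "a \<equiv> g (Inr (0, 1))"
abbreviation "b \<equiv> g (Inr (1, 1))"
abbreviation "Gr i \<equiv> fst (Gs ! i)"
abbreviation "u i \<equiv> snd (Gs ! i)"

lemma lGs: "length Gs \<ge> 3" using len l3 by simp
lemma l012: "0 < length Gs" "1 < length Gs" "2 < length Gs" using lGs by auto

lemma wfi: "i < length Gs \<Longrightarrow> wf_graph (Gr i) \<and> u i \<in> verts (Gr i)"
  using wfs by (auto simp: wf_rooted_def)

lemma dbli: "i < length Gs \<Longrightarrow> dbl (Gr i)" using wfi wf_dbl by blast
lemma closedi: "i < length Gs \<Longrightarrow> closed (Gr i)" using wfi wf_closed by blast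
lemma finitei: "i < length Gs \<Longrightarrow> finite (verts (Gr i))" using wfi by (auto simp: wf_graph_def)
lemma rooti: "i < length Gs \<Longrightarrow> u i \<in> verts (Gr i)" using wfi by blast

lemma a_eq: "a = (if \<tau> ! 0 = 1 then Inl (0, u 0) else Inr (0, 1))" by simp
lemma b_eq: "b = (if \<tau> ! 1 = 1 then Inl (1, u 1) else Inr (1, 1))" by simp

lemma V_char: "p \<in> V \<longleftrightarrow> p = c \<or>
    (\<exists>i x. p = Inl (i, x) \<and> i < length Gs \<and> x \<in> verts (Gr i) \<and> \<not> (x = u i \<and> \<tau> ! i = 0)) \<or>
    (\<exists>i j. p = Inr (i, j) \<and> i < length Gs \<and> 0 < j \<and> j < \<tau> ! i)"
  by (rule verts_spider_char) (rule rooti)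

lemma finV: "finite V"
  unfolding verts_spider using finite_spider_base[OF finitei len] by simp

lemma V_c: "c \<in> V" unfolding V_char by simp
lemma V_Inl: "i < length Gs \<Longrightarrow> x \<in> verts (Gr i) \<Longrightarrow> \<not> (x = u i \<and> \<tau> ! i = 0) \<Longrightarrow> Inl (i, x) \<in> V"
  unfolding V_char by blast
lemma V_Inr: "i < length Gs \<Longrightarrow> 0 < j \<Longrightarrow> j < \<tau> ! i \<Longrightarrow> Inr (i, j) \<in> V"
  unfolding V_char by blast

lemma abc_V: "a \<in> V" "b \<in> V" "c \<in> V"
proof -
  show "a \<in> V"
  proof (cases "\<tau> ! 0 = 1")
    case True then show ?thesis using V_Inl[OF l012(1) rooti[OF l012(1)]] by simp
  next
    case False then show ?thesis using V_Inr[OF l012(1), of 1] t0 by simp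
  qed
  show "b \<in> V"
  proof (cases "\<tau> ! 1 = 1")
    case True then show ?thesis using V_Inl[OF l012(2) rooti[OF l012(2)]] by simp
  next
    case False then show ?thesis using V_Inr[OF l012(2), of 1] t1 by simp
  qed
  show "c \<in> V" by (rule V_c)
qed

lemma abc_ne: "c \<noteq> a" "c \<noteq> b" "a \<noteq> b"
  using t0 t1 by (auto simp: spider_center_def)

definition Bs :: "'a svert \<Rightarrow> 'a svert \<Rightarrow> bool" where
  "Bs x y \<longleftrightarrow> (\<exists>i x0 y0. i < length Gs \<and> adj (Gr i) x0 y0 \<and> x = Inl (i, x0) \<and> y = Inl (i, y0)) \<or>
     (\<exists>i j. i < length Gs \<and> j < \<tau> ! i \<and> (2 \<le> i \<or> 1 \<le> j) \<and>
        (x = Inr (i, j) \<and> y = Inr (i, Suc j) \<or> x = Inr (i, Suc j) \<and> y = Inr (i, j)))"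

definition R0 :: "'a svert \<Rightarrow> 'a svert \<Rightarrow> bool" where
  "R0 p q \<longleftrightarrow> (\<exists>x y. Bs x y \<and> p = g x \<and> q = g y \<and> p \<noteq> q)"

lemma R0I: "Bs x y \<Longrightarrow> g x \<noteq> g y \<Longrightarrow> R0 (g x) (g y)"
  unfolding R0_def by blast

lemma adjB: "adj (spider_base \<tau> Gs) x y \<longleftrightarrow>
   (\<exists>i x0 y0. i < length Gs \<and> adj (Gr i) x0 y0 \<and> x = Inl (i, x0) \<and> y = Inl (i, y0)) \<or>
   (\<exists>i j. i < length Gs \<and> j < \<tau> ! i \<and> (x = Inr (i, j) \<and> y = Inr (i, Suc j) \<or> x = Inr (i, Suc j) \<and> y = Inr (i, j)))"
  by (rule adj_spider_base) (rule dbli)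

lemma adjG: "adj GG p q \<longleftrightarrow> R0 p q \<or> E2 c a p q \<or> E2 c b p q"
proof
  assume "adj GG p q"
  then obtain x y where xy: "adj (spider_base \<tau> Gs) x y" "p = g x" "q = g y" "p \<noteq> q"
    unfolding adj_spider by blast
  from xy(1) show "R0 p q \<or> E2 c a p q \<or> E2 c b p q"
    unfolding adjB
  proof (elim disjE exE conjE)
    fix i x0 y0 assume "i < length Gs" "adj (Gr i) x0 y0" "x = Inl (i, x0)" "y = Inl (i, y0)"
    then have "Bs x y" unfolding Bs_def by blast
    then show ?thesis using xy R0I by blast
  next
    fix i j assume h: "i < length Gs" "j < \<tau> ! i" "x = Inr (i, j)" "y = Inr (i, Suc j)"
    show ?thesis
    proof (cases "2 \<le> i \<or> 1 \<le> j")
      case True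
      then have "Bs x y" unfolding Bs_def using h by blast
      then show ?thesis using xy R0I by blast
    next
      case False
      then have j0: "j = 0" and "i = 0 \<or> i = 1" by auto
      then show ?thesis
      proof (elim disjE)
        assume "i = 0" then have "p = c" "q = a" using h xy j0 by simp_all
        then show ?thesis unfolding E2_def by simp
      next
        assume "i = 1" then have "p = c" "q = b" using h xy j0 by simp_all
        then show ?thesis unfolding E2_def by simp
      qed
    qed
  next
    fix i j assume h: "i < length Gs" "j < \<tau> ! i" "x = Inr (i, Suc j)" "y = Inr (i, j)"
    show ?thesis
    proof (cases "2 \<le> i \<or> 1 \<le> j")
      case True
      then have "Bs x y" unfolding Bs_def using h by blast
      then show ?thesis using xy R0I by blast
    next
      case False
      then have j0: "j = 0" and "i = 0 \<or> i = 1" by auto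
      then show ?thesis
      proof (elim disjE)
        assume "i = 0" then have "q = c" "p = a" using h xy j0 by simp_all
        then show ?thesis unfolding E2_def by simp
      next
        assume "i = 1" then have "q = c" "p = b" using h xy j0 by simp_all
        then show ?thesis unfolding E2_def by simp
      qed
    qed
  qed
next
  assume "R0 p q \<or> E2 c a p q \<or> E2 c b p q"
  then show "adj GG p q"
  proof (elim disjE)
    assume "R0 p q"
    then obtain x y where xy: "Bs x y" "p = g x" "q = g y" "p \<noteq> q" unfolding R0_def by blast
    have "adj (spider_base \<tau> Gs) x y" using xy(1) unfolding adjB Bs_def by blast
    then show ?thesis unfolding adj_spider using xy by blast
  next
    assume h: "E2 c a p q"
    have "adj (spider_base \<tau> Gs) (Inr (0, 0)) (Inr (0, 1))" "adj (spider_base \<tau> Gs) (Inr (0, 1)) (Inr (0, 0))"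
      unfolding adjB using t0 lGs by auto
    then show ?thesis unfolding adj_spider using h abc_ne unfolding E2_def
      by (metis spider_glue.simps(2))
  next
    assume h: "E2 c b p q"
    have "adj (spider_base \<tau> Gs) (Inr (1, 0)) (Inr (1, 1))" "adj (spider_base \<tau> Gs) (Inr (1, 1)) (Inr (1, 0))"
      unfolding adjB using t1 lGs by auto
    then show ?thesis unfolding adj_spider using h abc_ne unfolding E2_def
      by (metis spider_glue.simps(2))
  qed
qed

lemma closedG: "closed GG" by (rule closed_spider) (use dbli closedi in auto)

lemma csfG: "csf GG = cs V (\<lambda>p q. (R0 p q \<or> E2 c a p q) \<or> E2 c b p q)"
  unfolding csf_closed[OF closedG] by (rule cs_cong) (simp add: adjG)

end


lemma ex3: "(\<exists>i<(3::nat). P i) \<longleftrightarrow> P 0 \<or> P 1 \<or> P 2"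
  by (metis One_nat_def less_2_cases numeral_3_eq_3 less_Suc_eq zero_less_numeral less_numeral_extra(1) Suc_1 lessI)

lemma lt3: "(i::nat) < Suc (Suc (Suc 0)) \<longleftrightarrow> i = 0 \<or> i = 1 \<or> i = 2" by auto
lemma lt3': "(i::nat) < 3 \<longleftrightarrow> i = 0 \<or> i = 1 \<or> i = 2" by auto

context ctx begin

abbreviation "HH \<equiv> spider (drop 2 \<tau>) (drop 2 Gs)"
abbreviation "gH \<equiv> spider_glue (drop 2 \<tau>) (drop 2 Gs)"
abbreviation "\<tau>T \<equiv> [\<tau> ! 0 - 1, \<tau> ! 1, 1]"
abbreviation "Ts \<equiv> [rmap Inl (Gs ! 0), rmap Inl (Gs ! 1), rmap Inr (HH, spider_center)]"
abbreviation "TT \<equiv> spider \<tau>T Ts"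
abbreviation "gT \<equiv> spider_glue \<tau>T Ts"

lemma dGs[simp]: "drop 2 Gs ! i = Gs ! (i + 2)" using lGs by (simp add: nth_drop add.commute)
lemma dtau[simp]: "drop 2 \<tau> ! i = \<tau> ! (i + 2)" using l3 by (simp add: nth_drop add.commute)
lemma ldGs[simp]: "i < length Gs - 2 \<longleftrightarrow> i + 2 < length Gs" using lGs by auto

lemma H_char: "h \<in> verts HH \<longleftrightarrow> h = spider_center \<or>
    (\<exists>i x. h = Inl (i, x) \<and> i + 2 < length Gs \<and> x \<in> verts (Gr (i + 2)) \<and> \<not> (x = u (i + 2) \<and> \<tau> ! (i + 2) = 0)) \<or>
    (\<exists>i j. h = Inr (i, j) \<and> i + 2 < length Gs \<and> 0 < j \<and> j < \<tau> ! (i + 2))"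
  by (subst verts_spider_char) (use rooti in auto)

lemma dbl_dGs: "i < length (drop 2 Gs) \<Longrightarrow> dbl (fst (drop 2 Gs ! i))" using dbli by simp
lemma closed_dGs: "i < length (drop 2 Gs) \<Longrightarrow> closed (fst (drop 2 Gs ! i))" using closedi by simp

lemma adjBH: "adj (spider_base (drop 2 \<tau>) (drop 2 Gs)) x y \<longleftrightarrow>
   (\<exists>i x0 y0. i + 2 < length Gs \<and> adj (Gr (i + 2)) x0 y0 \<and> x = Inl (i, x0) \<and> y = Inl (i, y0)) \<or>
   (\<exists>i j. i + 2 < length Gs \<and> j < \<tau> ! (i + 2) \<and> (x = Inr (i, j) \<and> y = Inr (i, Suc j) \<or> x = Inr (i, Suc j) \<and> y = Inr (i, j)))"
  by (subst adj_spider_base) (use dbl_dGs in auto)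

lemma dblH: "dbl HH" by (rule dbl_spider) (auto intro: dbli)
lemma closedH: "closed HH" by (rule closed_spider) (auto intro: dbli closedi)

lemma Ts_nth: "Ts ! 0 = rmap Inl (Gs ! 0)" "Ts ! 1 = rmap Inl (Gs ! 1)" "Ts ! 2 = rmap Inr (HH, spider_center)"
  by simp_all

lemma T_char: "p \<in> verts TT \<longleftrightarrow> p = spider_center \<or>
   (\<exists>x. p = Inl (0, Inl x) \<and> x \<in> verts (Gr 0) \<and> \<not> (x = u 0 \<and> \<tau> ! 0 = 1)) \<or>
   (\<exists>x. p = Inl (1, Inl x) \<and> x \<in> verts (Gr 1)) \<or>
   (\<exists>h. p = Inl (2, Inr h) \<and> h \<in> verts HH) \<or>
   (\<exists>j. p = Inr (0, j) \<and> 0 < j \<and> j < \<tau> ! 0 - 1) \<or>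
   (\<exists>j. p = Inr (1, j) \<and> 0 < j \<and> j < \<tau> ! 1)"
proof -
  have roots: "\<And>i. i < length Ts \<Longrightarrow> snd (Ts ! i) \<in> verts (fst (Ts ! i))"
  proof -
    fix i :: nat assume "i < length Ts"
    then have "i = 0 \<or> i = 1 \<or> i = 2" by auto
    then show "snd (Ts ! i) \<in> verts (fst (Ts ! i))"
      using rooti[OF l012(1)] rooti[OF l012(2)] H_char by auto
  qed
  have "p \<in> verts TT \<longleftrightarrow> p = spider_center \<or>
    (\<exists>i x. p = Inl (i, x) \<and> i < length Ts \<and> x \<in> verts (fst (Ts ! i)) \<and> \<not> (x = snd (Ts ! i) \<and> \<tau>T ! i = 0)) \<or>
    (\<exists>i j. p = Inr (i, j) \<and> i < length Ts \<and> 0 < j \<and> j < \<tau>T ! i)"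
    by (rule verts_spider_char[OF roots])
  also have "\<dots> \<longleftrightarrow> p = spider_center \<or>
   (\<exists>x. p = Inl (0, Inl x) \<and> x \<in> verts (Gr 0) \<and> \<not> (x = u 0 \<and> \<tau> ! 0 = 1)) \<or>
   (\<exists>x. p = Inl (1, Inl x) \<and> x \<in> verts (Gr 1)) \<or>
   (\<exists>h. p = Inl (2, Inr h) \<and> h \<in> verts HH) \<or>
   (\<exists>j. p = Inr (0, j) \<and> 0 < j \<and> j < \<tau> ! 0 - 1) \<or>
   (\<exists>j. p = Inr (1, j) \<and> 0 < j \<and> j < \<tau> ! 1)"
    using t0 t1 by (simp add: lt3 lt3' ex_disj_distrib conj_disj_distribR conj_disj_distribL) (auto simp: spider_center_def)
  finally show ?thesis .
qed

definition phiH :: "'a svert \<Rightarrow> 'a svert" where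
  "phiH h = (case h of Inl (i, x) \<Rightarrow> Inl (i + 2, x) | Inr (i, j) \<Rightarrow> if j = 0 then c else Inr (i + 2, j))"

definition phiT :: "('a + 'a svert) svert \<Rightarrow> 'a svert" where
  "phiT p = (case p of Inl (i, Inl x) \<Rightarrow> Inl (i, x) | Inl (i, Inr h) \<Rightarrow> phiH h
     | Inr (i, j) \<Rightarrow> if j = 0 then a else if i = 0 then Inr (0, j + 1) else Inr (1, j))"

definition psiT :: "'a svert \<Rightarrow> ('a + 'a svert) svert" where
  "psiT v = (case v of Inl (i, x) \<Rightarrow> (if i = 0 then (if x = u 0 \<and> \<tau> ! 0 = 1 then spider_center else Inl (0, Inl x))
        else if i = 1 then Inl (1, Inl x) else Inl (2, Inr (Inl (i - 2, x))))
     | Inr (i, j) \<Rightarrow> if j = 0 then Inl (2, Inr spider_center) else if i = 0 then Inr (0, j - 1)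
        else if i = 1 then Inr (1, j) else Inl (2, Inr (Inr (i - 2, j))))"

lemma phiH_simps[simp]: "phiH (Inl (i, x)) = Inl (i + 2, x)" "phiH (Inr (i, j)) = (if j = 0 then c else Inr (i + 2, j))"
  by (simp_all add: phiH_def)

lemma phiT_simps[simp]: "phiT (Inl (i, Inl x)) = Inl (i, x)" "phiT (Inl (i, Inr h)) = phiH h"
  "phiT (Inr (i, j)) = (if j = 0 then a else if i = 0 then Inr (0, j + 1) else Inr (1, j))"
  by (simp_all add: phiT_def)

lemma psiT_simps[simp]:
  "psiT (Inl (i, x)) = (if i = 0 then (if x = u 0 \<and> \<tau> ! 0 = 1 then spider_center else Inl (0, Inl x))
        else if i = 1 then Inl (1, Inl x) else Inl (2, Inr (Inl (i - 2, x))))"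
  "psiT (Inr (i, j)) = (if j = 0 then Inl (2, Inr spider_center) else if i = 0 then Inr (0, j - 1)
        else if i = 1 then Inr (1, j) else Inl (2, Inr (Inr (i - 2, j))))"
  by (simp_all add: psiT_def)

lemma phiT_V: "p \<in> verts TT \<Longrightarrow> phiT p \<in> V"
  unfolding T_char
proof (elim disjE exE conjE)
  assume "p = spider_center" then show ?thesis using abc_V by (simp add: spider_center_def)
next
  fix x assume "p = Inl (0, Inl x)" "x \<in> verts (Gr 0)" "\<not> (x = u 0 \<and> \<tau> ! 0 = 1)"
  then show ?thesis using V_Inl[OF l012(1)] t0 by simp
next
  fix x assume "p = Inl (1, Inl x)" "x \<in> verts (Gr 1)"
  then show ?thesis using V_Inl[OF l012(2)] t1 by simp
next
  fix h assume "p = Inl (2, Inr h)" "h \<in> verts HH"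
  then show ?thesis unfolding H_char using V_c V_Inl V_Inr by (auto simp: spider_center_def)
next
  fix j assume "p = Inr (0, j)" "0 < j" "j < \<tau> ! 0 - 1"
  then show ?thesis using V_Inr[OF l012(1), of "j + 1"] by simp
next
  fix j assume "p = Inr (1, j)" "0 < j" "j < \<tau> ! 1"
  then show ?thesis using V_Inr[OF l012(2), of j] by simp
qed

lemma psiT_T: "v \<in> V \<Longrightarrow> psiT v \<in> verts TT"
  unfolding V_char
proof (elim disjE exE conjE)
  assume "v = c" then show ?thesis unfolding T_char H_char by (simp add: spider_center_def)
next
  fix i x assume h: "v = Inl (i, x)" "i < length Gs" "x \<in> verts (Gr i)" "\<not> (x = u i \<and> \<tau> ! i = 0)"
  consider "i = 0" | "i = 1" | "2 \<le> i" by linarith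
  then show ?thesis
  proof cases
    case 1 then show ?thesis using h unfolding T_char by auto
  next
    case 2 then show ?thesis using h unfolding T_char by auto
  next
    case 3
    then obtain k where k: "i = k + 2" by (metis add.commute le_add_diff_inverse)
    have "Inl (k, x) \<in> verts HH" unfolding H_char using h k by auto
    then show ?thesis using h k unfolding T_char by auto
  qed
next
  fix i j assume h: "v = Inr (i, j)" "i < length Gs" "0 < j" "j < \<tau> ! i"
  consider "i = 0" | "i = 1" | "2 \<le> i" by linarith
  then show ?thesis
  proof cases
    case 1 then show ?thesis using h unfolding T_char by (cases "j = 1") (auto simp: spider_center_def)
  next
    case 2 then show ?thesis using h unfolding T_char by auto
  next
    case 3
    then obtain k where k: "i = k + 2" by (metis add.commute le_add_diff_inverse)
    have "Inr (k, j) \<in> verts HH" unfolding H_char using h k by auto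
    then show ?thesis using h k unfolding T_char by auto
  qed
qed

lemma psi_phi_T: "p \<in> verts TT \<Longrightarrow> psiT (phiT p) = p"
  unfolding T_char
proof (elim disjE exE conjE)
  fix h assume "p = Inl (2, Inr h)" "h \<in> verts HH"
  then show ?thesis unfolding H_char by (auto simp: spider_center_def)
qed (use t0 in \<open>auto simp: spider_center_def\<close>)

lemma phi_psi_T: "v \<in> V \<Longrightarrow> phiT (psiT v) = v"
  unfolding V_char
proof (elim disjE exE conjE)
  fix i j assume "v = Inr (i, j)" "i < length Gs" "0 < j" "j < \<tau> ! i"
  then show ?thesis by (cases "i = 0"; cases "j = 1") (auto simp: spider_center_def)
qed (use t0 in \<open>auto simp: spider_center_def\<close>)

lemma bijT: "bij_betw phiT (verts TT) V"
proof (rule bij_betwI[where g = psiT])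
  show "phiT \<in> verts TT \<rightarrow> V" using phiT_V by blast
  show "psiT \<in> V \<rightarrow> verts TT" using psiT_T by blast
  show "\<And>x. x \<in> verts TT \<Longrightarrow> psiT (phiT x) = x" by (rule psi_phi_T)
  show "\<And>y. y \<in> V \<Longrightarrow> phiT (psiT y) = y" by (rule phi_psi_T)
qed

end


lemma adj_irrefl[simp]: "\<not> adj G x x" unfolding adj_def by simp

context ctx begin

lemma Bs_path: "i < length Gs \<Longrightarrow> j < \<tau> ! i \<Longrightarrow> 2 \<le> i \<or> 1 \<le> j \<Longrightarrow> Bs (Inr (i, j)) (Inr (i, Suc j))"
  unfolding Bs_def by blast
lemma Bs_path': "i < length Gs \<Longrightarrow> j < \<tau> ! i \<Longrightarrow> 2 \<le> i \<or> 1 \<le> j \<Longrightarrow> Bs (Inr (i, Suc j)) (Inr (i, j))"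
  unfolding Bs_def by blast
lemma Bs_graph: "i < length Gs \<Longrightarrow> adj (Gr i) x y \<Longrightarrow> Bs (Inl (i, x)) (Inl (i, y))"
  unfolding Bs_def by blast

lemma dblTs: "i < length Ts \<Longrightarrow> dbl (fst (Ts ! i))"
proof -
  assume "i < length Ts"
  then have "i = 0 \<or> i = 1 \<or> i = 2" by auto
  then show "dbl (fst (Ts ! i))"
    using dbl_gmap[OF dbli[OF l012(1)]] dbl_gmap[OF dbli[OF l012(2)]] dbl_gmap[OF dblH] by auto
qed

lemma closedTs: "i < length Ts \<Longrightarrow> closed (fst (Ts ! i))"
proof -
  assume "i < length Ts"
  then have "i = 0 \<or> i = 1 \<or> i = 2" by auto
  then show "closed (fst (Ts ! i))"
    using closed_gmap[OF closedi[OF l012(1)]] closed_gmap[OF closedi[OF l012(2)]] closed_gmap[OF closedH] by auto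
qed

lemma closedT: "closed TT" by (rule closed_spider) (use dblTs closedTs in auto)

lemma finT: "finite (verts TT)" using bijT finV bij_betw_finite by blast

lemma adjBT: "adj (spider_base \<tau>T Ts) x y \<longleftrightarrow>
   (\<exists>x0 y0. adj (Gr 0) x0 y0 \<and> x = Inl (0, Inl x0) \<and> y = Inl (0, Inl y0)) \<or>
   (\<exists>x0 y0. adj (Gr 1) x0 y0 \<and> x = Inl (1, Inl x0) \<and> y = Inl (1, Inl y0)) \<or>
   (\<exists>h1 h2. adj HH h1 h2 \<and> x = Inl (2, Inr h1) \<and> y = Inl (2, Inr h2)) \<or>
   (\<exists>j. j < \<tau> ! 0 - 1 \<and> (x = Inr (0, j) \<and> y = Inr (0, Suc j) \<or> x = Inr (0, Suc j) \<and> y = Inr (0, j))) \<or>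
   (\<exists>j. j < \<tau> ! 1 \<and> (x = Inr (1, j) \<and> y = Inr (1, Suc j) \<or> x = Inr (1, Suc j) \<and> y = Inr (1, j))) \<or>
   (x = Inr (2, 0) \<and> y = Inr (2, 1) \<or> x = Inr (2, 1) \<and> y = Inr (2, 0))"
  apply (subst adj_spider_base[OF dblTs], assumption)
  apply (simp add: lt3 lt3' ex_disj_distrib conj_disj_distribR conj_disj_distribL adj_gmap)
  apply (auto simp: less_Suc_eq)
  done

lemma adjTI: "adj (spider_base \<tau>T Ts) x y \<Longrightarrow> gT x \<noteq> gT y \<Longrightarrow> adj TT (gT x) (gT y)"
  unfolding adj_spider by blast

lemma adjHI: "adj (spider_base (drop 2 \<tau>) (drop 2 Gs)) x y \<Longrightarrow> gH x \<noteq> gH y \<Longrightarrow> adj HH (gH x) (gH y)"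
  unfolding adj_spider by blast

definition shH :: "'a svert \<Rightarrow> 'a svert" where
  "shH y = (case y of Inl (i, x) \<Rightarrow> Inl (i + 2, x) | Inr (i, j) \<Rightarrow> Inr (i + 2, j))"

lemma F1: "phiT (gT (Inl (0, Inl x))) = g (Inl (0, x))" using t0 l012 by (auto simp: spider_center_def)
lemma F2: "phiT (gT (Inl (1, Inl x))) = g (Inl (1, x))" using t1 l012 by auto
lemma F3: "phiT (gT (Inl (2, Inr h))) = phiH h" by simp
lemma F4: "phiH (gH y) = g (shH y)"
  by (cases y) (auto simp: shH_def spider_center_def)
lemma F5: "j \<le> \<tau> ! 0 - 1 \<Longrightarrow> phiT (gT (Inr (0, j))) = g (Inr (0, j + 1))"
  using t0 l012 by (auto simp: spider_center_def)
lemma F6: "j \<le> \<tau> ! 1 \<Longrightarrow> phiT (gT (Inr (1, j))) = (if j = 0 then a else g (Inr (1, j)))"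
  using t1 l012 by (auto simp: spider_center_def)
lemma F7: "phiT (gT (Inr (2, 0))) = a" "phiT (gT (Inr (2, 1))) = c"
  by (auto simp: spider_center_def)

lemma Bs_shH: "adj (spider_base (drop 2 \<tau>) (drop 2 Gs)) y1 y2 \<Longrightarrow> Bs (shH y1) (shH y2)"
  unfolding adjBH Bs_def shH_def by fastforce

definition Rt where "Rt v w \<longleftrightarrow> (R0 v w \<or> E2 c a v w) \<or> E2 a b v w"

lemma inj_phiT: "p \<in> verts TT \<Longrightarrow> q \<in> verts TT \<Longrightarrow> p \<noteq> q \<Longrightarrow> phiT p \<noteq> phiT q"
  using psi_phi_T by metis

lemma fwdT:
  assumes "adj TT p q" "p \<in> verts TT" "q \<in> verts TT"
  shows "Rt (phiT p) (phiT q)"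
proof -
  obtain x y where xy: "adj (spider_base \<tau>T Ts) x y" "p = gT x" "q = gT y" "p \<noteq> q"
    using assms(1) unfolding adj_spider by blast
  have ne: "phiT p \<noteq> phiT q" using inj_phiT assms xy(4) by blast
  from xy(1) show ?thesis unfolding adjBT
  proof (elim disjE exE conjE)
    fix x0 y0 assume h: "adj (Gr 0) x0 y0" "x = Inl (0, Inl x0)" "y = Inl (0, Inl y0)"
    have "Bs (Inl (0, x0)) (Inl (0, y0))" unfolding Bs_def using h l012 by blast
    then show ?thesis using ne R0I xy h unfolding Rt_def F1 by (simp only: F1) blast
  next
    fix x0 y0 assume h: "adj (Gr 1) x0 y0" "x = Inl (1, Inl x0)" "y = Inl (1, Inl y0)"
    have "Bs (Inl (1, x0)) (Inl (1, y0))" unfolding Bs_def using h l012 by blast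
    then show ?thesis using ne R0I xy h unfolding Rt_def by (simp only: F2) blast
  next
    fix h1 h2 assume h: "adj HH h1 h2" "x = Inl (2, Inr h1)" "y = Inl (2, Inr h2)"
    then obtain y1 y2 where yy: "adj (spider_base (drop 2 \<tau>) (drop 2 Gs)) y1 y2" "h1 = gH y1" "h2 = gH y2"
      unfolding adj_spider by blast
    have "Bs (shH y1) (shH y2)" using Bs_shH[OF yy(1)] .
    then show ?thesis using ne R0I xy h yy unfolding Rt_def by (simp only: F3 F4) blast
  next
    fix j assume h: "j < \<tau> ! 0 - 1" "x = Inr (0, j)" "y = Inr (0, Suc j)"
    have "Bs (Inr (0, j + 1)) (Inr (0, Suc (j + 1)))" using h l012 by (intro Bs_path) auto
    moreover have "phiT p = g (Inr (0, j + 1))" "phiT q = g (Inr (0, Suc (j + 1)))"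
      using F5[of j] F5[of "Suc j"] h xy by auto
    ultimately show ?thesis using ne R0I unfolding Rt_def by metis
  next
    fix j assume h: "j < \<tau> ! 0 - 1" "x = Inr (0, Suc j)" "y = Inr (0, j)"
    have "Bs (Inr (0, Suc (j + 1))) (Inr (0, j + 1))" using h l012 by (intro Bs_path') auto
    moreover have "phiT q = g (Inr (0, j + 1))" "phiT p = g (Inr (0, Suc (j + 1)))"
      using F5[of j] F5[of "Suc j"] h xy by auto
    ultimately show ?thesis using ne R0I unfolding Rt_def by metis
  next
    fix j assume h: "j < \<tau> ! 1" "x = Inr (1, j)" "y = Inr (1, Suc j)"
    show ?thesis
    proof (cases "j = 0")
      case True
      then have "phiT p = a" "phiT q = b" using F6[of 0] F6[of 1] h xy t1 by auto
      then show ?thesis unfolding Rt_def E2_def by simp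
    next
      case False
      have "Bs (Inr (1, j)) (Inr (1, Suc j))" using h l012 False by (intro Bs_path) auto
      moreover have "phiT p = g (Inr (1, j))" "phiT q = g (Inr (1, Suc j))"
        using F6[of j] F6[of "Suc j"] h xy False by auto
      ultimately show ?thesis using ne R0I unfolding Rt_def by metis
    qed
  next
    fix j assume h: "j < \<tau> ! 1" "x = Inr (1, Suc j)" "y = Inr (1, j)"
    show ?thesis
    proof (cases "j = 0")
      case True
      then have "phiT q = a" "phiT p = b" using F6[of 0] F6[of 1] h xy t1 by auto
      then show ?thesis unfolding Rt_def E2_def by simp
    next
      case False
      have "Bs (Inr (1, Suc j)) (Inr (1, j))" using h l012 False by (intro Bs_path') auto
      moreover have "phiT q = g (Inr (1, j))" "phiT p = g (Inr (1, Suc j))"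
        using F6[of j] F6[of "Suc j"] h xy False by auto
      ultimately show ?thesis using ne R0I unfolding Rt_def by metis
    qed
  next
    assume h: "x = Inr (2, 0)" "y = Inr (2, 1)"
    then have "phiT p = a" "phiT q = c" using F7 xy by auto
    then show ?thesis unfolding Rt_def E2_def by simp
  next
    assume h: "x = Inr (2, 1)" "y = Inr (2, 0)"
    then have "phiT q = a" "phiT p = c" using F7 xy by auto
    then show ?thesis unfolding Rt_def E2_def by simp
  qed
qed

end


context ctx begin

lemma B1: "psiT (g (Inl (0, x))) = gT (Inl (0, Inl x))" using t0 l012 by auto
lemma B2: "psiT (g (Inl (1, x))) = gT (Inl (1, Inl x))" using t1 l012 by auto
lemma B3: "psiT (g (Inl (k + 2, x))) = gT (Inl (2, Inr (gH (Inl (k, x)))))"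
  by (auto simp: spider_center_def)
lemma B4: "psiT (g (Inr (k + 2, j))) = gT (Inl (2, Inr (gH (Inr (k, j)))))"
  by (auto simp: spider_center_def)
lemma B5: "1 \<le> j \<Longrightarrow> j \<le> \<tau> ! 0 \<Longrightarrow> psiT (g (Inr (0, j))) = gT (Inr (0, j - 1))"
  using t0 l012 by (auto simp: spider_center_def)
lemma B6: "1 \<le> j \<Longrightarrow> j \<le> \<tau> ! 1 \<Longrightarrow> psiT (g (Inr (1, j))) = gT (Inr (1, j))"
  using t1 l012 by (auto simp: spider_center_def)
lemma B7: "psiT c = gT (Inr (2, 1))" "psiT a = gT (Inr (2, 0))" "gT (Inr (1, 0)) = gT (Inr (2, 0))"
  using t0 l012 by (auto simp: spider_center_def)

lemma adjBT_I:
  "adj (Gr 0) x0 y0 \<Longrightarrow> adj (spider_base \<tau>T Ts) (Inl (0, Inl x0)) (Inl (0, Inl y0))"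
  "adj (Gr 1) x0 y0 \<Longrightarrow> adj (spider_base \<tau>T Ts) (Inl (1, Inl x0)) (Inl (1, Inl y0))"
  "adj HH h1 h2 \<Longrightarrow> adj (spider_base \<tau>T Ts) (Inl (2, Inr h1)) (Inl (2, Inr h2))"
  "j < \<tau> ! 0 - 1 \<Longrightarrow> adj (spider_base \<tau>T Ts) (Inr (0, j)) (Inr (0, Suc j))"
  "j < \<tau> ! 0 - 1 \<Longrightarrow> adj (spider_base \<tau>T Ts) (Inr (0, Suc j)) (Inr (0, j))"
  "j < \<tau> ! 1 \<Longrightarrow> adj (spider_base \<tau>T Ts) (Inr (1, j)) (Inr (1, Suc j))"
  "j < \<tau> ! 1 \<Longrightarrow> adj (spider_base \<tau>T Ts) (Inr (1, Suc j)) (Inr (1, j))"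
  "adj (spider_base \<tau>T Ts) (Inr (2, 0)) (Inr (2, 1))"
  "adj (spider_base \<tau>T Ts) (Inr (2, 1)) (Inr (2, 0))"
  unfolding adjBT by blast+

lemma Bs_cases:
  assumes "Bs x y"
  obtains (g0) x0 y0 where "adj (Gr 0) x0 y0" "x = Inl (0, x0)" "y = Inl (0, y0)"
  | (g1) x0 y0 where "adj (Gr 1) x0 y0" "x = Inl (1, x0)" "y = Inl (1, y0)"
  | (gk) k x0 y0 where "k + 2 < length Gs" "adj (Gr (k + 2)) x0 y0" "x = Inl (k + 2, x0)" "y = Inl (k + 2, y0)"
  | (p0) j where "1 \<le> j" "j < \<tau> ! 0" "x = Inr (0, j) \<and> y = Inr (0, Suc j) \<or> x = Inr (0, Suc j) \<and> y = Inr (0, j)"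
  | (p1) j where "1 \<le> j" "j < \<tau> ! 1" "x = Inr (1, j) \<and> y = Inr (1, Suc j) \<or> x = Inr (1, Suc j) \<and> y = Inr (1, j)"
  | (pk) k j where "k + 2 < length Gs" "j < \<tau> ! (k + 2)" "x = Inr (k + 2, j) \<and> y = Inr (k + 2, Suc j) \<or> x = Inr (k + 2, Suc j) \<and> y = Inr (k + 2, j)"
proof -
  from assms consider (G) i x0 y0 where "i < length Gs" "adj (Gr i) x0 y0" "x = Inl (i, x0)" "y = Inl (i, y0)"
    | (P) i j where "i < length Gs" "j < \<tau> ! i" "2 \<le> i \<or> 1 \<le> j"
      "x = Inr (i, j) \<and> y = Inr (i, Suc j) \<or> x = Inr (i, Suc j) \<and> y = Inr (i, j)"
    unfolding Bs_def by blast
  then show ?thesis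
  proof cases
    case (G i x0 y0)
    note h = G
    consider "i = 0" | "i = 1" | k where "i = k + 2" by (metis add_2_eq_Suc' less_2_cases not_less_eq plus_1_eq_Suc One_nat_def le_add_diff_inverse2 not_less)
    then show ?thesis by cases (use h that in auto)
  next
    case (P i j)
    note h = P
    consider "i = 0" | "i = 1" | k where "i = k + 2" by (metis add_2_eq_Suc' less_2_cases not_less_eq plus_1_eq_Suc One_nat_def le_add_diff_inverse2 not_less)
    then show ?thesis
    proof cases
      case 1 then show ?thesis using h that(4)[of j] by auto
    next
      case 2 then show ?thesis using h that(5)[of j] by auto
    next
      case 3 then show ?thesis using h that(6)[of k j] by auto
    qed
  qed
qed

lemma bwdT:
  assumes v: "v \<in> V" and w: "w \<in> V" and R: "Rt v w"
  shows "adj TT (psiT v) (psiT w)"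
proof -
  have "v \<noteq> w" using R abc_ne unfolding Rt_def R0_def E2_def by auto
  then have ne: "psiT v \<noteq> psiT w" using phi_psi_T v w by metis
  from R show ?thesis unfolding Rt_def
  proof (elim disjE)
    assume "E2 c a v w"
    moreover have "psiT c = gT (Inr (2, 1))" "psiT a = gT (Inr (2, 0))" using B7 by simp_all
    ultimately show ?thesis using ne adjTI adjBT_I(8,9) unfolding E2_def by metis
  next
    assume "E2 a b v w"
    moreover have "psiT b = gT (Inr (1, 1))" using B6[of 1] t1 by simp
    moreover have "psiT a = gT (Inr (1, 0))" using B7 by simp
    moreover have "adj (spider_base \<tau>T Ts) (Inr (1, 0)) (Inr (1, 1))" "adj (spider_base \<tau>T Ts) (Inr (1, 1)) (Inr (1, 0))"
      using adjBT_I(6,7)[of 0] t1 by auto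
    ultimately show ?thesis using ne adjTI unfolding E2_def by metis
  next
    assume "R0 v w"
    then obtain x y where xy: "Bs x y" "v = g x" "w = g y" unfolding R0_def by blast
    from xy(1) show ?thesis
    proof (cases rule: Bs_cases)
      case (g0 x0 y0)
      then show ?thesis using ne xy adjTI adjBT_I(1) B1 by metis
    next
      case (g1 x0 y0)
      then show ?thesis using ne xy adjTI adjBT_I(2) B2 by metis
    next
      case (gk k x0 y0)
      have "adj (spider_base (drop 2 \<tau>) (drop 2 Gs)) (Inl (k, x0)) (Inl (k, y0))"
        unfolding adjBH using gk by blast
      moreover have ne': "gH (Inl (k, x0)) \<noteq> gH (Inl (k, y0))" using ne xy gk B3 by metis
      ultimately have "adj HH (gH (Inl (k, x0))) (gH (Inl (k, y0)))" by (rule adjHI)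
      then show ?thesis using ne xy gk adjTI adjBT_I(3) B3 by metis
    next
      case (p0 j)
      have "psiT (g (Inr (0, j))) = gT (Inr (0, j - 1))" "psiT (g (Inr (0, Suc j))) = gT (Inr (0, Suc (j - 1)))"
        using B5[of j] B5[of "Suc j"] p0 by auto
      moreover have "j - 1 < \<tau> ! 0 - 1" using p0 by auto
      ultimately show ?thesis using ne xy p0(3) adjTI adjBT_I(4,5) by metis
    next
      case (p1 j)
      have "psiT (g (Inr (1, j))) = gT (Inr (1, j))" "psiT (g (Inr (1, Suc j))) = gT (Inr (1, Suc j))"
        using B6[of j] B6[of "Suc j"] p1 by auto
      then show ?thesis using ne xy p1 adjTI adjBT_I(6,7) by metis
    next
      case (pk k j)
      have "adj (spider_base (drop 2 \<tau>) (drop 2 Gs)) (Inr (k, j)) (Inr (k, Suc j))"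
        "adj (spider_base (drop 2 \<tau>) (drop 2 Gs)) (Inr (k, Suc j)) (Inr (k, j))"
        unfolding adjBH using pk by blast+
      then have "gH (Inr (k, j)) \<noteq> gH (Inr (k, Suc j)) \<Longrightarrow> adj HH (gH (Inr (k, j))) (gH (Inr (k, Suc j)))"
        "gH (Inr (k, Suc j)) \<noteq> gH (Inr (k, j)) \<Longrightarrow> adj HH (gH (Inr (k, Suc j))) (gH (Inr (k, j)))"
        using adjHI by blast+
      then show ?thesis using ne xy pk(3) adjTI adjBT_I(3) B4 by metis
    qed
  qed
qed

lemma isoT: "csf TT = cs V Rt"
proof -
  have "csf TT = cs (verts TT) (adj TT)" by (rule csf_closed[OF closedT])
  also have "\<dots> = cs V Rt"
  proof (rule cs_iso[OF finT bijT])
    fix p q assume p: "p \<in> verts TT" and q: "q \<in> verts TT"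
    show "adj TT p q = Rt (phiT p) (phiT q)"
    proof
      assume "adj TT p q" then show "Rt (phiT p) (phiT q)" using fwdT p q by blast
    next
      assume "Rt (phiT p) (phiT q)"
      then have "adj TT (psiT (phiT p)) (psiT (phiT q))" using bwdT phiT_V p q by blast
      then show "adj TT p q" using psi_phi_T p q by simp
    qed
  qed
  finally show ?thesis .
qed

end


definition legi :: "'a svert \<Rightarrow> nat" where
  "legi v = (case v of Inl (i, x) \<Rightarrow> i | Inr (i, j) \<Rightarrow> i)"

lemma legi_simps[simp]: "legi (Inl (i, x)) = i" "legi (Inr (i, j)) = i" by (simp_all add: legi_def)

context ctx begin

definition Wd :: "nat \<Rightarrow> 'a svert set" where "Wd d = {v \<in> V. v = c \<or> d \<le> legi v}"

definition phiD :: "nat \<Rightarrow> 'a svert \<Rightarrow> 'a svert" where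
  "phiD d h = (case h of Inl (i, x) \<Rightarrow> Inl (i + d, x) | Inr (i, j) \<Rightarrow> if j = 0 then c else Inr (i + d, j))"
definition psiD :: "nat \<Rightarrow> 'a svert \<Rightarrow> 'a svert" where
  "psiD d v = (case v of Inl (i, x) \<Rightarrow> Inl (i - d, x) | Inr (i, j) \<Rightarrow> if j = 0 then c else Inr (i - d, j))"
definition shD :: "nat \<Rightarrow> 'a svert \<Rightarrow> 'a svert" where
  "shD d y = (case y of Inl (i, x) \<Rightarrow> Inl (i + d, x) | Inr (i, j) \<Rightarrow> Inr (i + d, j))"

lemma phiD_simps[simp]: "phiD d (Inl (i, x)) = Inl (i + d, x)" "phiD d (Inr (i, j)) = (if j = 0 then c else Inr (i + d, j))"
  by (simp_all add: phiD_def)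
lemma psiD_simps[simp]: "psiD d (Inl (i, x)) = Inl (i - d, x)" "psiD d (Inr (i, j)) = (if j = 0 then c else Inr (i - d, j))"
  by (simp_all add: psiD_def)
lemma shD_simps[simp]: "shD d (Inl (i, x)) = Inl (i + d, x)" "shD d (Inr (i, j)) = Inr (i + d, j)"
  by (simp_all add: shD_def)

end

locale ctxd = ctx +
  fixes d :: nat
  assumes d1: "1 \<le> d" and dl: "d \<le> length Gs"
begin

abbreviation "SD \<equiv> spider (drop d \<tau>) (drop d Gs)"
abbreviation "gD \<equiv> spider_glue (drop d \<tau>) (drop d Gs)"

lemma dGsD[simp]: "drop d Gs ! i = Gs ! (i + d)" using dl by (simp add: nth_drop add.commute)
lemma dtauD[simp]: "drop d \<tau> ! i = \<tau> ! (i + d)" using dl len by (simp add: nth_drop add.commute)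
lemma ldGsD[simp]: "i < length Gs - d \<longleftrightarrow> i + d < length Gs" using dl by auto
lemma ldtauD[simp]: "length (drop d \<tau>) = length Gs - d" using len by simp

lemma SD_char: "h \<in> verts SD \<longleftrightarrow> h = c \<or>
    (\<exists>i x. h = Inl (i, x) \<and> i + d < length Gs \<and> x \<in> verts (Gr (i + d)) \<and> \<not> (x = u (i + d) \<and> \<tau> ! (i + d) = 0)) \<or>
    (\<exists>i j. h = Inr (i, j) \<and> i + d < length Gs \<and> 0 < j \<and> j < \<tau> ! (i + d))"
  by (subst verts_spider_char) (use rooti in auto)

lemma W_char: "v \<in> Wd d \<longleftrightarrow> v = c \<or>
    (\<exists>k x. v = Inl (k + d, x) \<and> k + d < length Gs \<and> x \<in> verts (Gr (k + d)) \<and> \<not> (x = u (k + d) \<and> \<tau> ! (k + d) = 0)) \<or>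
    (\<exists>k j. v = Inr (k + d, j) \<and> k + d < length Gs \<and> 0 < j \<and> j < \<tau> ! (k + d))"
proof
  assume "v \<in> Wd d"
  then have v: "v \<in> V" "v = c \<or> d \<le> legi v" unfolding Wd_def by auto
  from v(1) show "v = c \<or>
    (\<exists>k x. v = Inl (k + d, x) \<and> k + d < length Gs \<and> x \<in> verts (Gr (k + d)) \<and> \<not> (x = u (k + d) \<and> \<tau> ! (k + d) = 0)) \<or>
    (\<exists>k j. v = Inr (k + d, j) \<and> k + d < length Gs \<and> 0 < j \<and> j < \<tau> ! (k + d))"
    unfolding V_char
  proof (elim disjE exE conjE)
    fix i x assume h: "v = Inl (i, x)" "i < length Gs" "x \<in> verts (Gr i)" "\<not> (x = u i \<and> \<tau> ! i = 0)"
    then have "d \<le> i" using v(2) by (auto simp: spider_center_def)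
    then obtain k where "i = k + d" by (metis add.commute le_add_diff_inverse)
    then show ?thesis using h by blast
  next
    fix i j assume h: "v = Inr (i, j)" "i < length Gs" "0 < j" "j < \<tau> ! i"
    then have "d \<le> i" using v(2) by (auto simp: spider_center_def)
    then obtain k where "i = k + d" by (metis add.commute le_add_diff_inverse)
    then show ?thesis using h by blast
  qed simp
next
  assume "v = c \<or>
    (\<exists>k x. v = Inl (k + d, x) \<and> k + d < length Gs \<and> x \<in> verts (Gr (k + d)) \<and> \<not> (x = u (k + d) \<and> \<tau> ! (k + d) = 0)) \<or>
    (\<exists>k j. v = Inr (k + d, j) \<and> k + d < length Gs \<and> 0 < j \<and> j < \<tau> ! (k + d))"
  then show "v \<in> Wd d" unfolding Wd_def using V_c V_Inl V_Inr by auto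
qed

lemma phiD_W: "p \<in> verts SD \<Longrightarrow> phiD d p \<in> Wd d"
  unfolding SD_char W_char by (auto simp: spider_center_def)

lemma psiD_SD: "v \<in> Wd d \<Longrightarrow> psiD d v \<in> verts SD"
  unfolding SD_char W_char by (auto simp: spider_center_def)

lemma psi_phi_D: "p \<in> verts SD \<Longrightarrow> psiD d (phiD d p) = p"
  unfolding SD_char by (auto simp: spider_center_def)

lemma phi_psi_D: "v \<in> Wd d \<Longrightarrow> phiD d (psiD d v) = v"
  unfolding W_char by (auto simp: spider_center_def)

lemma bijD: "bij_betw (phiD d) (verts SD) (Wd d)"
proof (rule bij_betwI[where g = "psiD d"])
  show "phiD d \<in> verts SD \<rightarrow> Wd d" using phiD_W by blast
  show "psiD d \<in> Wd d \<rightarrow> verts SD" using psiD_SD by blast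
  show "\<And>x. x \<in> verts SD \<Longrightarrow> psiD d (phiD d x) = x" by (rule psi_phi_D)
  show "\<And>y. y \<in> Wd d \<Longrightarrow> phiD d (psiD d y) = y" by (rule phi_psi_D)
qed

lemma finW: "finite (Wd d)" using finV unfolding Wd_def by simp
lemma finSD: "finite (verts SD)" using bijD finW bij_betw_finite by blast

lemma adjBD: "adj (spider_base (drop d \<tau>) (drop d Gs)) x y \<longleftrightarrow>
   (\<exists>i x0 y0. i + d < length Gs \<and> adj (Gr (i + d)) x0 y0 \<and> x = Inl (i, x0) \<and> y = Inl (i, y0)) \<or>
   (\<exists>i j. i + d < length Gs \<and> j < \<tau> ! (i + d) \<and> (x = Inr (i, j) \<and> y = Inr (i, Suc j) \<or> x = Inr (i, Suc j) \<and> y = Inr (i, j)))"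
  by (subst adj_spider_base) (use dbli in auto)

lemma closedSD: "closed SD" by (rule closed_spider) (auto intro: dbli closedi)

lemma phiD_gD: "phiD d (gD y) = g (shD d y)"
  by (cases y) (auto simp: spider_center_def)

lemma psiD_g: "psiD d (g (Inl (k + d, x))) = gD (Inl (k, x))" "psiD d (g (Inr (k + d, j))) = gD (Inr (k, j))"
  by (auto simp: spider_center_def)

lemma adjB_sh: "adj (spider_base (drop d \<tau>) (drop d Gs)) y1 y2 \<Longrightarrow> adj (spider_base \<tau> Gs) (shD d y1) (shD d y2)"
  unfolding adjBD adjB by fastforce

lemma fwdD: "adj SD p q \<Longrightarrow> adj GG (phiD d p) (phiD d q)"
proof -
  assume "adj SD p q"
  then obtain y1 y2 where yy: "adj (spider_base (drop d \<tau>) (drop d Gs)) y1 y2" "p = gD y1" "q = gD y2" "p \<noteq> q"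
    unfolding adj_spider by blast
  have pq: "p \<in> verts SD" "q \<in> verts SD" using closedSD \<open>adj SD p q\<close> unfolding closed_def by blast+
  have "phiD d p \<noteq> phiD d q" using psi_phi_D pq yy(4) by metis
  moreover have "phiD d p = g (shD d y1)" "phiD d q = g (shD d y2)" using yy phiD_gD by simp_all
  ultimately show ?thesis using adjB_sh[OF yy(1)] unfolding adj_spider by metis
qed

lemma notW_Inl: "i < d \<Longrightarrow> Inl (i, x) \<notin> Wd d" unfolding Wd_def by (auto simp: spider_center_def)
lemma notW_Inr: "i < d \<Longrightarrow> j \<noteq> 0 \<Longrightarrow> Inr (i, j) \<notin> Wd d" unfolding Wd_def by (auto simp: spider_center_def)

lemma bwdD: "v \<in> Wd d \<Longrightarrow> w \<in> Wd d \<Longrightarrow> adj GG v w \<Longrightarrow> adj SD (psiD d v) (psiD d w)"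
proof -
  assume v: "v \<in> Wd d" and w: "w \<in> Wd d" and "adj GG v w"
  then obtain x y where xy: "adj (spider_base \<tau> Gs) x y" "v = g x" "w = g y" "v \<noteq> w"
    unfolding adj_spider by blast
  have ne: "psiD d v \<noteq> psiD d w" using phi_psi_D v w xy(4) by metis
  from xy(1) show ?thesis unfolding adjB
  proof (elim disjE exE conjE)
    fix i x0 y0 assume h: "i < length Gs" "adj (Gr i) x0 y0" "x = Inl (i, x0)" "y = Inl (i, y0)"
    show ?thesis
    proof (cases "d \<le> i")
      case True
      then obtain k where k: "i = k + d" by (metis add.commute le_add_diff_inverse)
      have "adj (spider_base (drop d \<tau>) (drop d Gs)) (Inl (k, x0)) (Inl (k, y0))" unfolding adjBD using h k by blast
      then show ?thesis using ne xy h k psiD_g(1) unfolding adj_spider by metis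
    next
      case False
      have "x0 \<noteq> y0" using h(2) unfolding adj_def by blast
      then have "g x \<notin> Wd d \<or> g y \<notin> Wd d" using h False notW_Inl[of i] by auto
      then show ?thesis using v w xy by blast
    qed
  next
    fix i j assume h: "i < length Gs" "j < \<tau> ! i" "x = Inr (i, j)" "y = Inr (i, Suc j)"
    show ?thesis
    proof (cases "d \<le> i")
      case True
      then obtain k where k: "i = k + d" by (metis add.commute le_add_diff_inverse)
      have "adj (spider_base (drop d \<tau>) (drop d Gs)) (Inr (k, j)) (Inr (k, Suc j))" unfolding adjBD using h k by blast
      then show ?thesis using ne xy h k psiD_g(2) unfolding adj_spider by metis
    next
      case False
      then have "g y \<notin> Wd d" using h notW_Inl[of i] notW_Inr[of i] by auto
      then show ?thesis using w xy by blast
    qed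
  next
    fix i j assume h: "i < length Gs" "j < \<tau> ! i" "x = Inr (i, Suc j)" "y = Inr (i, j)"
    show ?thesis
    proof (cases "d \<le> i")
      case True
      then obtain k where k: "i = k + d" by (metis add.commute le_add_diff_inverse)
      have "adj (spider_base (drop d \<tau>) (drop d Gs)) (Inr (k, Suc j)) (Inr (k, j))" unfolding adjBD using h k by blast
      then show ?thesis using ne xy h k psiD_g(2) unfolding adj_spider by metis
    next
      case False
      then have "g x \<notin> Wd d" using h notW_Inl[of i] notW_Inr[of i] by auto
      then show ?thesis using v xy by blast
    qed
  qed
qed

lemma isoD: "csf SD = cs (Wd d) (adj GG)"
proof -
  have "csf SD = cs (verts SD) (adj SD)" by (rule csf_closed[OF closedSD])
  also have "\<dots> = cs (Wd d) (adj GG)"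
  proof (rule cs_iso[OF finSD bijD])
    fix p q assume p: "p \<in> verts SD" and q: "q \<in> verts SD"
    show "adj SD p q = adj GG (phiD d p) (phiD d q)"
    proof
      assume "adj SD p q" then show "adj GG (phiD d p) (phiD d q)" by (rule fwdD)
    next
      assume "adj GG (phiD d p) (phiD d q)"
      then have "adj SD (psiD d (phiD d p)) (psiD d (phiD d q))" using bwdD phiD_W p q by blast
      then show "adj SD p q" using psi_phi_D p q by simp
    qed
  qed
  finally show ?thesis .
qed

end


lemma Pk_char:
  assumes r1: "snd Gu \<in> verts (fst Gu)" and r2: "snd Hv \<in> verts (fst Hv)"
  shows "p \<in> verts (Pk k Gu Hv) \<longleftrightarrow> (\<exists>x. p = Inl (0, x) \<and> x \<in> verts (fst Gu)) \<or>
     (\<exists>y. p = Inl (1, y) \<and> y \<in> verts (fst Hv) \<and> \<not> (y = snd Hv \<and> k = 0)) \<or>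
     (\<exists>j. p = Inr (0, j) \<and> 0 < j \<and> j < k)"
proof
  assume "p \<in> verts (Pk k Gu Hv)"
  then obtain x where x: "x \<in> verts (path_base k Gu Hv)" "p = path_glue k Gu Hv x" unfolding verts_Pk by blast
  from x(1) show "(\<exists>x. p = Inl (0, x) \<and> x \<in> verts (fst Gu)) \<or>
     (\<exists>y. p = Inl (1, y) \<and> y \<in> verts (fst Hv) \<and> \<not> (y = snd Hv \<and> k = 0)) \<or>
     (\<exists>j. p = Inr (0, j) \<and> 0 < j \<and> j < k)"
    unfolding verts_path_base
  proof (elim disjE exE conjE)
    fix j assume "x = Inr (0, j)" "j \<le> k"
    then show ?thesis using x(2) r1 r2 by (cases "j = 0"; cases "j = k") auto
  qed (use x(2) r1 in auto)
next
  assume "(\<exists>x. p = Inl (0, x) \<and> x \<in> verts (fst Gu)) \<or>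
     (\<exists>y. p = Inl (1, y) \<and> y \<in> verts (fst Hv) \<and> \<not> (y = snd Hv \<and> k = 0)) \<or>
     (\<exists>j. p = Inr (0, j) \<and> 0 < j \<and> j < k)"
  then show "p \<in> verts (Pk k Gu Hv)"
  proof (elim disjE exE conjE)
    fix x assume "p = Inl (0, x)" "x \<in> verts (fst Gu)"
    then show ?thesis unfolding verts_Pk
      by (intro image_eqI[where x = "Inl (0, x)"]) (auto simp: verts_path_base)
  next
    fix y assume "p = Inl (1, y)" "y \<in> verts (fst Hv)" "\<not> (y = snd Hv \<and> k = 0)"
    then show ?thesis unfolding verts_Pk
      by (intro image_eqI[where x = "Inl (1, y)"]) (auto simp: verts_path_base)
  next
    fix j assume "p = Inr (0, j)" "0 < j" "j < k"
    then show ?thesis unfolding verts_Pk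
      by (intro image_eqI[where x = "Inr (0, j)"]) (auto simp: verts_path_base)
  qed
qed

context ctx begin

definition U :: "nat \<Rightarrow> 'a svert set" where "U d = {v \<in> V. v \<noteq> c \<and> legi v < d}"

abbreviation "k0 \<equiv> \<tau> ! 0 + \<tau> ! 1 - 1"
abbreviation "PP \<equiv> Pk k0 (Gs ! 0) (Gs ! 1)"
abbreviation "pg \<equiv> path_glue k0 (Gs ! 0) (Gs ! 1)"

lemma U2_char: "v \<in> U 2 \<longleftrightarrow> (\<exists>x. v = Inl (0, x) \<and> x \<in> verts (Gr 0)) \<or> (\<exists>x. v = Inl (1, x) \<and> x \<in> verts (Gr 1)) \<or>
   (\<exists>j. v = Inr (0, j) \<and> 0 < j \<and> j < \<tau> ! 0) \<or> (\<exists>j. v = Inr (1, j) \<and> 0 < j \<and> j < \<tau> ! 1)"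
proof
  assume "v \<in> U 2"
  then have v: "v \<in> V" "v \<noteq> c" "legi v < 2" unfolding U_def by auto
  from v(1) show "(\<exists>x. v = Inl (0, x) \<and> x \<in> verts (Gr 0)) \<or> (\<exists>x. v = Inl (1, x) \<and> x \<in> verts (Gr 1)) \<or>
   (\<exists>j. v = Inr (0, j) \<and> 0 < j \<and> j < \<tau> ! 0) \<or> (\<exists>j. v = Inr (1, j) \<and> 0 < j \<and> j < \<tau> ! 1)"
    unfolding V_char
  proof (elim disjE exE conjE)
    fix i x assume "v = Inl (i, x)" "i < length Gs" "x \<in> verts (Gr i)"
    moreover then have "i = 0 \<or> i = 1" using v(3) by auto
    ultimately show ?thesis by auto
  next
    fix i j assume "v = Inr (i, j)" "i < length Gs" "0 < j" "j < \<tau> ! i"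
    moreover then have "i = 0 \<or> i = 1" using v(3) by auto
    ultimately show ?thesis by auto
  qed (use v in simp)
next
  assume "(\<exists>x. v = Inl (0, x) \<and> x \<in> verts (Gr 0)) \<or> (\<exists>x. v = Inl (1, x) \<and> x \<in> verts (Gr 1)) \<or>
   (\<exists>j. v = Inr (0, j) \<and> 0 < j \<and> j < \<tau> ! 0) \<or> (\<exists>j. v = Inr (1, j) \<and> 0 < j \<and> j < \<tau> ! 1)"
  then show "v \<in> U 2" unfolding U_def using V_Inl[OF l012(1)] V_Inl[OF l012(2)] V_Inr[OF l012(1)] V_Inr[OF l012(2)] t0 t1
    by (auto simp: spider_center_def)
qed

lemma PP_char: "p \<in> verts PP \<longleftrightarrow> (\<exists>x. p = Inl (0, x) \<and> x \<in> verts (Gr 0)) \<or> (\<exists>x. p = Inl (1, x) \<and> x \<in> verts (Gr 1)) \<or>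
   (\<exists>j. p = Inr (0, j) \<and> 0 < j \<and> j < k0)"
  by (subst Pk_char) (use rooti l012 t0 t1 in auto)

definition phiP :: "'a svert \<Rightarrow> 'a svert" where
  "phiP p = (case p of Inl (i, x) \<Rightarrow> Inl (i, x) | Inr (i, j) \<Rightarrow> if j < \<tau> ! 0 then Inr (0, \<tau> ! 0 - j) else Inr (1, j + 1 - \<tau> ! 0))"
definition psiP :: "'a svert \<Rightarrow> 'a svert" where
  "psiP v = (case v of Inl (i, x) \<Rightarrow> Inl (i, x) | Inr (i, j) \<Rightarrow> if i = 0 then Inr (0, \<tau> ! 0 - j) else Inr (0, j + \<tau> ! 0 - 1))"

lemma phiP_simps[simp]: "phiP (Inl (i, x)) = Inl (i, x)"
  "phiP (Inr (i, j)) = (if j < \<tau> ! 0 then Inr (0, \<tau> ! 0 - j) else Inr (1, j + 1 - \<tau> ! 0))"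
  by (simp_all add: phiP_def)
lemma psiP_simps[simp]: "psiP (Inl (i, x)) = Inl (i, x)"
  "psiP (Inr (i, j)) = (if i = 0 then Inr (0, \<tau> ! 0 - j) else Inr (0, j + \<tau> ! 0 - 1))"
  by (simp_all add: psiP_def)

lemma phiP_U: "p \<in> verts PP \<Longrightarrow> phiP p \<in> U 2"
  unfolding PP_char U2_char using t0 t1 by (auto split: if_splits)
lemma psiP_PP: "v \<in> U 2 \<Longrightarrow> psiP v \<in> verts PP"
  unfolding PP_char U2_char using t0 t1 by auto
lemma psi_phi_P: "p \<in> verts PP \<Longrightarrow> psiP (phiP p) = p"
  unfolding PP_char using t0 t1 by auto
lemma phi_psi_P: "v \<in> U 2 \<Longrightarrow> phiP (psiP v) = v"
  unfolding U2_char using t0 t1 by auto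

lemma bijP: "bij_betw phiP (verts PP) (U 2)"
proof (rule bij_betwI[where g = psiP])
  show "phiP \<in> verts PP \<rightarrow> U 2" using phiP_U by blast
  show "psiP \<in> U 2 \<rightarrow> verts PP" using psiP_PP by blast
  show "\<And>x. x \<in> verts PP \<Longrightarrow> psiP (phiP x) = x" by (rule psi_phi_P)
  show "\<And>y. y \<in> U 2 \<Longrightarrow> phiP (psiP y) = y" by (rule phi_psi_P)
qed

lemma finU: "finite (U d)" using finV unfolding U_def by simp
lemma finPP: "finite (verts PP)" using bijP finU bij_betw_finite by blast

lemma closedPP: "closed PP" by (rule closed_Pk) (use dbli closedi l012 in auto)

lemma adjBP: "adj (path_base k0 (Gs ! 0) (Gs ! 1)) x y \<longleftrightarrow>
   (\<exists>x0 y0. adj (Gr 0) x0 y0 \<and> x = Inl (0, x0) \<and> y = Inl (0, y0)) \<or>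
   (\<exists>x0 y0. adj (Gr 1) x0 y0 \<and> x = Inl (1, x0) \<and> y = Inl (1, y0)) \<or>
   (\<exists>j. j < k0 \<and> (x = Inr (0, j) \<and> y = Inr (0, Suc j) \<or> x = Inr (0, Suc j) \<and> y = Inr (0, j)))"
  by (rule adj_path_base) (use dbli l012 in auto)

lemma adjBP_path: "j < k0 \<Longrightarrow> adj (path_base k0 (Gs ! 0) (Gs ! 1)) (Inr (0, j)) (Inr (0, Suc j))"
  "j < k0 \<Longrightarrow> adj (path_base k0 (Gs ! 0) (Gs ! 1)) (Inr (0, Suc j)) (Inr (0, j))"
  unfolding adjBP by blast+

lemma P_pos: "j \<le> k0 \<Longrightarrow> phiP (pg (Inr (0, j))) = (if j < \<tau> ! 0 then g (Inr (0, \<tau> ! 0 - j)) else g (Inr (1, j + 1 - \<tau> ! 0)))"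
  using t0 t1 by auto
lemma P_gr: "phiP (pg (Inl (0, x))) = g (Inl (0, x))" "phiP (pg (Inl (1, x))) = g (Inl (1, x))"
  using t0 t1 l012 by auto

lemma inj_phiP: "p \<in> verts PP \<Longrightarrow> q \<in> verts PP \<Longrightarrow> p \<noteq> q \<Longrightarrow> phiP p \<noteq> phiP q"
  using psi_phi_P by metis

definition RP where "RP v w \<longleftrightarrow> R0 v w \<or> E2 a b v w"

lemma fwdP_path:
  assumes "j < k0" and ne: "phiP (pg (Inr (0, j))) \<noteq> phiP (pg (Inr (0, Suc j)))"
  shows "RP (phiP (pg (Inr (0, j)))) (phiP (pg (Inr (0, Suc j))))"
proof -
  consider "Suc j < \<tau> ! 0" | "Suc j = \<tau> ! 0" | "\<tau> ! 0 \<le> j" by linarith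
  then show ?thesis
  proof cases
    case 1
    then have "phiP (pg (Inr (0, j))) = g (Inr (0, Suc (\<tau> ! 0 - Suc j)))" "phiP (pg (Inr (0, Suc j))) = g (Inr (0, \<tau> ! 0 - Suc j))"
      using P_pos[of j] P_pos[of "Suc j"] assms(1) by (auto simp: Suc_diff_Suc)
    moreover have "Bs (Inr (0, Suc (\<tau> ! 0 - Suc j))) (Inr (0, \<tau> ! 0 - Suc j))" using 1 l012 by (intro Bs_path') auto
    ultimately show ?thesis using ne R0I unfolding RP_def by metis
  next
    case 2
    then have "phiP (pg (Inr (0, j))) = a" "phiP (pg (Inr (0, Suc j))) = b"
      using P_pos[of j] P_pos[of "Suc j"] assms(1) by auto
    then show ?thesis unfolding RP_def E2_def by simp
  next
    case 3
    then have "phiP (pg (Inr (0, j))) = g (Inr (1, j + 1 - \<tau> ! 0))" "phiP (pg (Inr (0, Suc j))) = g (Inr (1, Suc (j + 1 - \<tau> ! 0)))"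
      using P_pos[of j] P_pos[of "Suc j"] assms(1) by auto
    moreover have "Bs (Inr (1, j + 1 - \<tau> ! 0)) (Inr (1, Suc (j + 1 - \<tau> ! 0)))" using 3 l012 assms(1) by (intro Bs_path) auto
    ultimately show ?thesis using ne R0I unfolding RP_def by metis
  qed
qed

lemma adj_sym: "adj G x y \<Longrightarrow> adj G y x" unfolding adj_def by blast

lemma Bs_sym: "Bs x y \<Longrightarrow> Bs y x"
proof -
  assume "Bs x y"
  then consider (G) i x0 y0 where "i < length Gs" "adj (Gr i) x0 y0" "x = Inl (i, x0)" "y = Inl (i, y0)"
    | (P) i j where "i < length Gs" "j < \<tau> ! i" "2 \<le> i \<or> 1 \<le> j" "x = Inr (i, j)" "y = Inr (i, Suc j)"
    | (P') i j where "i < length Gs" "j < \<tau> ! i" "2 \<le> i \<or> 1 \<le> j" "x = Inr (i, Suc j)" "y = Inr (i, j)"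
    unfolding Bs_def by blast
  then show "Bs y x"
  proof cases
    case G then show ?thesis using Bs_graph[OF G(1) adj_sym[OF G(2)]] by simp
  next
    case P then show ?thesis using Bs_path'[OF P(1-3)] by simp
  next
    case P' then show ?thesis using Bs_path[OF P'(1-3)] by simp
  qed
qed

lemma RP_sym: "RP v w \<Longrightarrow> RP w v"
  unfolding RP_def
proof (elim disjE)
  assume "R0 v w"
  then obtain x y where "Bs x y" "v = g x" "w = g y" "v \<noteq> w" unfolding R0_def by blast
  then have "R0 w v" using R0I[OF Bs_sym[OF \<open>Bs x y\<close>]] by simp
  then show "R0 w v \<or> E2 a b w v" by blast
next
  assume "E2 a b v w" then show "R0 w v \<or> E2 a b w v" unfolding E2_def by blast
qed

lemma fwdP:
  assumes "adj PP p q"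
  shows "RP (phiP p) (phiP q)"
proof -
  obtain x y where xy: "adj (path_base k0 (Gs ! 0) (Gs ! 1)) x y" "p = pg x" "q = pg y" "p \<noteq> q"
    using assms unfolding adj_Pk by blast
  have pq: "p \<in> verts PP" "q \<in> verts PP" using closedPP assms unfolding closed_def by blast+
  have ne: "phiP p \<noteq> phiP q" using inj_phiP pq xy(4) by blast
  from xy(1) show ?thesis unfolding adjBP
  proof (elim disjE exE conjE)
    fix x0 y0 assume h: "adj (Gr 0) x0 y0" "x = Inl (0, x0)" "y = Inl (0, y0)"
    then show ?thesis using ne xy R0I Bs_graph[OF l012(1) h(1)] P_gr unfolding RP_def by metis
  next
    fix x0 y0 assume h: "adj (Gr 1) x0 y0" "x = Inl (1, x0)" "y = Inl (1, y0)"
    then show ?thesis using ne xy R0I Bs_graph[OF l012(2) h(1)] P_gr unfolding RP_def by metis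
  next
    fix j assume h: "j < k0" "x = Inr (0, j)" "y = Inr (0, Suc j)"
    then show ?thesis using fwdP_path ne xy by metis
  next
    fix j assume h: "j < k0" "x = Inr (0, Suc j)" "y = Inr (0, j)"
    then show ?thesis using fwdP_path ne xy RP_sym by metis
  qed
qed

lemma P_B: "1 \<le> j \<Longrightarrow> j \<le> \<tau> ! 0 \<Longrightarrow> psiP (g (Inr (0, j))) = pg (Inr (0, \<tau> ! 0 - j))"
  "1 \<le> j \<Longrightarrow> j \<le> \<tau> ! 1 \<Longrightarrow> psiP (g (Inr (1, j))) = pg (Inr (0, j + \<tau> ! 0 - 1))"
  "psiP (g (Inl (0, x))) = pg (Inl (0, x))" "psiP (g (Inl (1, x))) = pg (Inl (1, x))"
  using t0 t1 l012 by auto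

lemma adjPI: "adj (path_base k0 (Gs ! 0) (Gs ! 1)) x y \<Longrightarrow> pg x \<noteq> pg y \<Longrightarrow> adj PP (pg x) (pg y)"
  unfolding adj_Pk by blast

lemma notU2: "g (Inl (k + 2, x)) \<notin> U 2" "g (Inr (k + 2, j)) \<notin> U 2"
  unfolding U_def by auto

lemma bwdP:
  assumes v: "v \<in> U 2" and w: "w \<in> U 2" and R: "RP v w"
  shows "adj PP (psiP v) (psiP w)"
proof -
  have "v \<noteq> w" using R abc_ne unfolding RP_def R0_def E2_def by auto
  then have ne: "psiP v \<noteq> psiP w" using phi_psi_P v w by metis
  from R show ?thesis unfolding RP_def
  proof (elim disjE)
    assume "E2 a b v w"
    moreover have "psiP a = pg (Inr (0, \<tau> ! 0 - 1))" "psiP b = pg (Inr (0, Suc (\<tau> ! 0 - 1)))"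
      using P_B(1)[of 1] P_B(2)[of 1] t0 t1 by auto
    moreover have "adj (path_base k0 (Gs ! 0) (Gs ! 1)) (Inr (0, \<tau> ! 0 - 1)) (Inr (0, Suc (\<tau> ! 0 - 1)))"
      "adj (path_base k0 (Gs ! 0) (Gs ! 1)) (Inr (0, Suc (\<tau> ! 0 - 1))) (Inr (0, \<tau> ! 0 - 1))"
      using adjBP_path[of "\<tau> ! 0 - 1"] t0 t1 by auto
    ultimately show ?thesis using ne adjPI unfolding E2_def by metis
  next
    assume "R0 v w"
    then obtain x y where xy: "Bs x y" "v = g x" "w = g y" unfolding R0_def by blast
    from xy(1) show ?thesis
    proof (cases rule: Bs_cases)
      case (g0 x0 y0)
      have "adj (path_base k0 (Gs ! 0) (Gs ! 1)) (Inl (0, x0)) (Inl (0, y0))" unfolding adjBP using g0 by blast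
      then show ?thesis using ne xy g0 adjPI P_B(3) by metis
    next
      case (g1 x0 y0)
      have "adj (path_base k0 (Gs ! 0) (Gs ! 1)) (Inl (1, x0)) (Inl (1, y0))" unfolding adjBP using g1 by blast
      then show ?thesis using ne xy g1 adjPI P_B(4) by metis
    next
      case (gk k x0 y0) then show ?thesis using v xy notU2 by metis
    next
      case (p0 j)
      have e: "psiP (g (Inr (0, j))) = pg (Inr (0, Suc (\<tau> ! 0 - Suc j)))" "psiP (g (Inr (0, Suc j))) = pg (Inr (0, \<tau> ! 0 - Suc j))"
        using P_B(1)[of j] P_B(1)[of "Suc j"] p0 by (auto simp: Suc_diff_Suc)
      have "adj (path_base k0 (Gs ! 0) (Gs ! 1)) (Inr (0, Suc (\<tau> ! 0 - Suc j))) (Inr (0, \<tau> ! 0 - Suc j))"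
        "adj (path_base k0 (Gs ! 0) (Gs ! 1)) (Inr (0, \<tau> ! 0 - Suc j)) (Inr (0, Suc (\<tau> ! 0 - Suc j)))"
        using adjBP_path[of "\<tau> ! 0 - Suc j"] p0 t1 by auto
      then show ?thesis using ne xy p0(3) adjPI e by metis
    next
      case (p1 j)
      have e: "psiP (g (Inr (1, j))) = pg (Inr (0, j + \<tau> ! 0 - 1))" "psiP (g (Inr (1, Suc j))) = pg (Inr (0, Suc (j + \<tau> ! 0 - 1)))"
        using P_B(2)[of j] P_B(2)[of "Suc j"] p1 t0 by auto
      have "adj (path_base k0 (Gs ! 0) (Gs ! 1)) (Inr (0, j + \<tau> ! 0 - 1)) (Inr (0, Suc (j + \<tau> ! 0 - 1)))"
        "adj (path_base k0 (Gs ! 0) (Gs ! 1)) (Inr (0, Suc (j + \<tau> ! 0 - 1))) (Inr (0, j + \<tau> ! 0 - 1))"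
        using adjBP_path[of "j + \<tau> ! 0 - 1"] p1 t0 by auto
      then show ?thesis using ne xy p1(3) adjPI e by metis
    next
      case (pk k j) then show ?thesis using v w xy notU2 by metis
    qed
  qed
qed

lemma isoP: "csf PP = cs (U 2) RP"
proof -
  have "csf PP = cs (verts PP) (adj PP)" by (rule csf_closed[OF closedPP])
  also have "\<dots> = cs (U 2) RP"
  proof (rule cs_iso[OF finPP bijP])
    fix p q assume p: "p \<in> verts PP" and q: "q \<in> verts PP"
    show "adj PP p q = RP (phiP p) (phiP q)"
    proof
      assume "adj PP p q" then show "RP (phiP p) (phiP q)" by (rule fwdP)
    next
      assume "RP (phiP p) (phiP q)"
      then have "adj PP (psiP (phiP p)) (psiP (phiP q))" using bwdP phiP_U p q by blast
      then show "adj PP p q" using psi_phi_P p q by simp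
    qed
  qed
  finally show ?thesis .
qed

end


lemma K1_simps[simp]: "verts (fst K1) = {undefined}" "edges (fst K1) = {}" "snd K1 = undefined"
  by (simp_all add: K1_def verts_def edges_def)

lemma dbl_K1: "dbl (fst K1)" by (simp add: dbl_def)
lemma closed_K1: "closed (fst K1)" by (simp add: closed_def adj_def)
lemma adj_K1[simp]: "\<not> adj (fst K1) x y" by (simp add: adj_def)

context ctx begin

abbreviation "QQ \<equiv> pendant (\<tau> ! 0 - 1) (Gs ! 0)"
abbreviation "pq \<equiv> path_glue (\<tau> ! 0 - 1) (Gs ! 0) K1"

lemma QQ_eq: "QQ = Pk (\<tau> ! 0 - 1) (Gs ! 0) K1" by (simp add: pendant_def)

lemma U1_char: "v \<in> U 1 \<longleftrightarrow> (\<exists>x. v = Inl (0, x) \<and> x \<in> verts (Gr 0)) \<or> (\<exists>j. v = Inr (0, j) \<and> 0 < j \<and> j < \<tau> ! 0)"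
proof
  assume "v \<in> U 1"
  then have v: "v \<in> V" "v \<noteq> c" "legi v < 1" unfolding U_def by auto
  from v(1) show "(\<exists>x. v = Inl (0, x) \<and> x \<in> verts (Gr 0)) \<or> (\<exists>j. v = Inr (0, j) \<and> 0 < j \<and> j < \<tau> ! 0)"
    unfolding V_char
  proof (elim disjE exE conjE)
    fix i x assume "v = Inl (i, x)" "i < length Gs" "x \<in> verts (Gr i)"
    moreover then have "i = 0" using v(3) by auto
    ultimately show ?thesis by auto
  next
    fix i j assume "v = Inr (i, j)" "i < length Gs" "0 < j" "j < \<tau> ! i"
    moreover then have "i = 0" using v(3) by auto
    ultimately show ?thesis by auto
  qed (use v in simp)
next
  assume "(\<exists>x. v = Inl (0, x) \<and> x \<in> verts (Gr 0)) \<or> (\<exists>j. v = Inr (0, j) \<and> 0 < j \<and> j < \<tau> ! 0)"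
  then show "v \<in> U 1" unfolding U_def using V_Inl[OF l012(1)] V_Inr[OF l012(1)] t0
    by (auto simp: spider_center_def)
qed

lemma QQ_char: "p \<in> verts QQ \<longleftrightarrow> (\<exists>x. p = Inl (0, x) \<and> x \<in> verts (Gr 0)) \<or> (p = Inl (1, undefined) \<and> 2 \<le> \<tau> ! 0) \<or>
   (\<exists>j. p = Inr (0, j) \<and> 0 < j \<and> j < \<tau> ! 0 - 1)"
  unfolding QQ_eq by (subst Pk_char) (use rooti l012 t0 in auto)

definition phiQ :: "'a svert \<Rightarrow> 'a svert" where
  "phiQ p = (case p of Inl (i, x) \<Rightarrow> if i = 0 then Inl (0, x) else a | Inr (i, j) \<Rightarrow> Inr (0, \<tau> ! 0 - j))"
definition psiQ :: "'a svert \<Rightarrow> 'a svert" where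
  "psiQ v = (case v of Inl (i, x) \<Rightarrow> Inl (0, x) | Inr (i, j) \<Rightarrow> if j = 1 then Inl (1, undefined) else Inr (0, \<tau> ! 0 - j))"

lemma phiQ_simps[simp]: "phiQ (Inl (i, x)) = (if i = 0 then Inl (0, x) else a)" "phiQ (Inr (i, j)) = Inr (0, \<tau> ! 0 - j)"
  by (simp_all add: phiQ_def)
lemma psiQ_simps[simp]: "psiQ (Inl (i, x)) = Inl (0, x)" "psiQ (Inr (i, j)) = (if j = 1 then Inl (1, undefined) else Inr (0, \<tau> ! 0 - j))"
  by (simp_all add: psiQ_def)

lemma phiQ_U: "p \<in> verts QQ \<Longrightarrow> phiQ p \<in> U 1"
  unfolding QQ_char U1_char using t0 by auto
lemma psiQ_QQ: "v \<in> U 1 \<Longrightarrow> psiQ v \<in> verts QQ"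
  unfolding QQ_char U1_char using t0 by (auto split: if_splits)
lemma psi_phi_Q: "p \<in> verts QQ \<Longrightarrow> psiQ (phiQ p) = p"
  unfolding QQ_char using t0 by auto
lemma phi_psi_Q: "v \<in> U 1 \<Longrightarrow> phiQ (psiQ v) = v"
  unfolding U1_char using t0 by auto

lemma bijQ: "bij_betw phiQ (verts QQ) (U 1)"
proof (rule bij_betwI[where g = psiQ])
  show "phiQ \<in> verts QQ \<rightarrow> U 1" using phiQ_U by blast
  show "psiQ \<in> U 1 \<rightarrow> verts QQ" using psiQ_QQ by blast
  show "\<And>x. x \<in> verts QQ \<Longrightarrow> psiQ (phiQ x) = x" by (rule psi_phi_Q)
  show "\<And>y. y \<in> U 1 \<Longrightarrow> phiQ (psiQ y) = y" by (rule phi_psi_Q)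
qed

lemma finQQ: "finite (verts QQ)" using bijQ finU bij_betw_finite by blast

lemma closedQQ: "closed QQ" unfolding QQ_eq
  by (rule closed_Pk) (use dbli closedi l012 dbl_K1 closed_K1 in auto)

lemma adjBQ: "adj (path_base (\<tau> ! 0 - 1) (Gs ! 0) K1) x y \<longleftrightarrow>
   (\<exists>x0 y0. adj (Gr 0) x0 y0 \<and> x = Inl (0, x0) \<and> y = Inl (0, y0)) \<or>
   (\<exists>j. j < \<tau> ! 0 - 1 \<and> (x = Inr (0, j) \<and> y = Inr (0, Suc j) \<or> x = Inr (0, Suc j) \<and> y = Inr (0, j)))"
  by (subst adj_path_base) (use dbli l012 dbl_K1 in auto)

lemma adjBQ_path: "j < \<tau> ! 0 - 1 \<Longrightarrow> adj (path_base (\<tau> ! 0 - 1) (Gs ! 0) K1) (Inr (0, j)) (Inr (0, Suc j))"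
  "j < \<tau> ! 0 - 1 \<Longrightarrow> adj (path_base (\<tau> ! 0 - 1) (Gs ! 0) K1) (Inr (0, Suc j)) (Inr (0, j))"
  unfolding adjBQ by blast+

lemma Q_pos: "j \<le> \<tau> ! 0 - 1 \<Longrightarrow> phiQ (pq (Inr (0, j))) = g (Inr (0, \<tau> ! 0 - j))"
  using t0 by auto
lemma Q_gr: "phiQ (pq (Inl (0, x))) = g (Inl (0, x))"
  using t0 l012 by auto

lemma inj_phiQ: "p \<in> verts QQ \<Longrightarrow> q \<in> verts QQ \<Longrightarrow> p \<noteq> q \<Longrightarrow> phiQ p \<noteq> phiQ q"
  using psi_phi_Q by metis

lemma adj_QQ: "adj QQ p q \<longleftrightarrow> (\<exists>x y. adj (path_base (\<tau> ! 0 - 1) (Gs ! 0) K1) x y \<and> p = pq x \<and> q = pq y \<and> p \<noteq> q)"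
  unfolding QQ_eq by (rule adj_Pk)

lemma fwdQ:
  assumes "adj QQ p q"
  shows "R0 (phiQ p) (phiQ q)"
proof -
  obtain x y where xy: "adj (path_base (\<tau> ! 0 - 1) (Gs ! 0) K1) x y" "p = pq x" "q = pq y" "p \<noteq> q"
    using assms unfolding adj_QQ by blast
  have pq: "p \<in> verts QQ" "q \<in> verts QQ" using closedQQ assms unfolding closed_def by blast+
  have ne: "phiQ p \<noteq> phiQ q" using inj_phiQ pq xy(4) by blast
  from xy(1) show ?thesis unfolding adjBQ
  proof (elim disjE exE conjE)
    fix x0 y0 assume h: "adj (Gr 0) x0 y0" "x = Inl (0, x0)" "y = Inl (0, y0)"
    then show ?thesis using ne xy R0I Bs_graph[OF l012(1) h(1)] Q_gr by metis
  next
    fix j assume h: "j < \<tau> ! 0 - 1" "x = Inr (0, j)" "y = Inr (0, Suc j)"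
    then have "phiQ p = g (Inr (0, Suc (\<tau> ! 0 - Suc j)))" "phiQ q = g (Inr (0, \<tau> ! 0 - Suc j))"
      using Q_pos[of j] Q_pos[of "Suc j"] xy by (auto simp: Suc_diff_Suc)
    moreover have "Bs (Inr (0, Suc (\<tau> ! 0 - Suc j))) (Inr (0, \<tau> ! 0 - Suc j))" using h l012 by (intro Bs_path') auto
    ultimately show ?thesis using ne R0I by metis
  next
    fix j assume h: "j < \<tau> ! 0 - 1" "x = Inr (0, Suc j)" "y = Inr (0, j)"
    then have "phiQ q = g (Inr (0, Suc (\<tau> ! 0 - Suc j)))" "phiQ p = g (Inr (0, \<tau> ! 0 - Suc j))"
      using Q_pos[of j] Q_pos[of "Suc j"] xy by (auto simp: Suc_diff_Suc)
    moreover have "Bs (Inr (0, \<tau> ! 0 - Suc j)) (Inr (0, Suc (\<tau> ! 0 - Suc j)))" using h l012 by (intro Bs_path) auto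
    ultimately show ?thesis using ne R0I by metis
  qed
qed

lemma Q_B: "1 \<le> j \<Longrightarrow> j \<le> \<tau> ! 0 \<Longrightarrow> psiQ (g (Inr (0, j))) = pq (Inr (0, \<tau> ! 0 - j))"
  "psiQ (g (Inl (0, x))) = pq (Inl (0, x))"
  using t0 l012 by auto

lemma adjQI: "adj (path_base (\<tau> ! 0 - 1) (Gs ! 0) K1) x y \<Longrightarrow> pq x \<noteq> pq y \<Longrightarrow> adj QQ (pq x) (pq y)"
  unfolding adj_QQ by blast

lemma notU1: "g (Inl (k + 1, x)) \<notin> U 1" "1 \<le> j \<Longrightarrow> g (Inr (k + 1, j)) \<notin> U 1" "g (Inr (k + 2, j)) \<notin> U 1"
  unfolding U_def by auto

lemma bwdQ:
  assumes v: "v \<in> U 1" and w: "w \<in> U 1" and R: "R0 v w \<or> E2 c b v w"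
  shows "adj QQ (psiQ v) (psiQ w)"
proof -
  have cU: "c \<notin> U 1" unfolding U_def by simp
  then have R0: "R0 v w" using R v w unfolding E2_def by auto
  have "v \<noteq> w" using R0 unfolding R0_def by auto
  then have ne: "psiQ v \<noteq> psiQ w" using phi_psi_Q v w by metis
  obtain x y where xy: "Bs x y" "v = g x" "w = g y" using R0 unfolding R0_def by blast
  from xy(1) show ?thesis
  proof (cases rule: Bs_cases)
    case (g0 x0 y0)
    have "adj (path_base (\<tau> ! 0 - 1) (Gs ! 0) K1) (Inl (0, x0)) (Inl (0, y0))" unfolding adjBQ using g0 by blast
    then show ?thesis using ne xy g0 adjQI Q_B(2) by metis
  next
    case (g1 x0 y0) then show ?thesis using v xy notU1(1)[of 0] by simp
  next
    case (gk k x0 y0) then show ?thesis using v xy notU1(1)[of "k + 1"] by (simp add: add.commute)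
  next
    case (p0 j)
    have e: "psiQ (g (Inr (0, j))) = pq (Inr (0, Suc (\<tau> ! 0 - Suc j)))" "psiQ (g (Inr (0, Suc j))) = pq (Inr (0, \<tau> ! 0 - Suc j))"
      using Q_B(1)[of j] Q_B(1)[of "Suc j"] p0 by (auto simp: Suc_diff_Suc)
    have "adj (path_base (\<tau> ! 0 - 1) (Gs ! 0) K1) (Inr (0, Suc (\<tau> ! 0 - Suc j))) (Inr (0, \<tau> ! 0 - Suc j))"
      "adj (path_base (\<tau> ! 0 - 1) (Gs ! 0) K1) (Inr (0, \<tau> ! 0 - Suc j)) (Inr (0, Suc (\<tau> ! 0 - Suc j)))"
      using adjBQ_path[of "\<tau> ! 0 - Suc j"] p0 by auto
    then show ?thesis using ne xy p0(3) adjQI e by metis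
  next
    case (p1 j) then show ?thesis using v w xy notU1(2)[of j 0] by auto
  next
    case (pk k j) then show ?thesis using v w xy notU1(3) by metis
  qed
qed

lemma isoQ: "csf QQ = cs (U 1) (\<lambda>v w. R0 v w \<or> E2 c b v w)"
proof -
  have "csf QQ = cs (verts QQ) (adj QQ)" by (rule csf_closed[OF closedQQ])
  also have "\<dots> = cs (U 1) (\<lambda>v w. R0 v w \<or> E2 c b v w)"
  proof (rule cs_iso[OF finQQ bijQ])
    fix p q assume p: "p \<in> verts QQ" and q: "q \<in> verts QQ"
    show "adj QQ p q = (R0 (phiQ p) (phiQ q) \<or> E2 c b (phiQ p) (phiQ q))"
    proof
      assume "adj QQ p q" then show "R0 (phiQ p) (phiQ q) \<or> E2 c b (phiQ p) (phiQ q)" using fwdQ by blast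
    next
      assume "R0 (phiQ p) (phiQ q) \<or> E2 c b (phiQ p) (phiQ q)"
      then have "adj QQ (psiQ (phiQ p)) (psiQ (phiQ q))" using bwdQ phiQ_U p q by blast
      then show "adj QQ p q" using psi_phi_Q p q by simp
    qed
  qed
  finally show ?thesis .
qed

end


context ctx begin

lemma Bs_side: "Bs x y \<Longrightarrow> d \<le> 2 \<Longrightarrow> (g x \<noteq> c \<and> legi (g x) < d) \<longleftrightarrow> (g y \<noteq> c \<and> legi (g y) < d)"
proof -
  assume B: "Bs x y" and d: "d \<le> 2"
  from B show ?thesis
  proof (cases rule: Bs_cases)
    case (g0 x0 y0) then show ?thesis using t0 l012 by (auto simp: spider_center_def)
  next
    case (g1 x0 y0) then show ?thesis using t1 l012 by (auto simp: spider_center_def)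
  next
    case (gk k x0 y0) then show ?thesis using d by (auto simp: spider_center_def)
  next
    case (p0 j) then show ?thesis using d by (auto simp: spider_center_def split: if_splits)
  next
    case (p1 j) then show ?thesis using d by (auto simp: spider_center_def split: if_splits)
  next
    case (pk k j) then show ?thesis using d by (auto simp: spider_center_def split: if_splits)
  qed
qed

lemma R0_side: "R0 v w \<Longrightarrow> d \<le> 2 \<Longrightarrow> v \<in> V \<Longrightarrow> w \<in> V \<Longrightarrow> (v \<in> U d \<longleftrightarrow> w \<in> U d)"
proof -
  assume R: "R0 v w" and d: "d \<le> 2" and V: "v \<in> V" "w \<in> V"
  then obtain x y where xy: "Bs x y" "v = g x" "w = g y" unfolding R0_def by blast
  have "(g x \<noteq> c \<and> legi (g x) < d) \<longleftrightarrow> (g y \<noteq> c \<and> legi (g y) < d)" by (rule Bs_side[OF xy(1) d])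
  then show ?thesis unfolding U_def using V xy by simp
qed

lemma V_split: "V = U d \<union> Wd d" "U d \<inter> Wd d = {}"
  unfolding U_def Wd_def by auto

lemma ctxd1: "ctxd \<tau> Gs 1" by (intro ctxd.intro ctx_axioms ctxd_axioms.intro) (use lGs in auto)
lemma ctxd2: "ctxd \<tau> Gs 2" by (intro ctxd.intro ctx_axioms ctxd_axioms.intro) (use lGs in auto)

lemma a_legi: "legi a = 0" "a \<noteq> c" using t0 by (auto simp: spider_center_def)
lemma b_legi: "legi b = 1" "b \<noteq> c" using t1 by (auto simp: spider_center_def)

lemma part1: "cs V (\<lambda>v w. R0 v w \<or> E2 c b v w) m = sf_times (csf QQ) (csf (spider (tl \<tau>) (tl Gs))) m"
proof -
  let ?R = "\<lambda>v w. R0 v w \<or> E2 c b v w"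
  have "cs V ?R m = cs (U 1 \<union> Wd 1) ?R m" using V_split(1)[of 1] by simp
  also have "\<dots> = sf_times (cs (U 1) ?R) (cs (Wd 1) ?R) m"
  proof (rule cs_union)
    show "finite (U 1)" by (rule finU)
    show "finite (Wd 1)" using finV unfolding Wd_def by simp
    show "U 1 \<inter> Wd 1 = {}" by (rule V_split(2))
    fix x y assume xy: "x \<in> U 1 \<union> Wd 1" "y \<in> U 1 \<union> Wd 1" and R: "?R x y"
    then have V: "x \<in> V" "y \<in> V" using V_split(1)[of 1] by auto
    from R show "x \<in> U 1 \<longleftrightarrow> y \<in> U 1"
    proof
      assume "R0 x y" then show ?thesis using R0_side V by simp
    next
      assume "E2 c b x y" then show ?thesis using b_legi unfolding E2_def U_def by auto
    qed
  qed
  also have "cs (U 1) ?R = csf QQ" using isoQ by simp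
  also have "cs (Wd 1) ?R = cs (Wd 1) (adj GG)"
  proof (rule cs_cong)
    fix x y assume "x \<in> Wd 1" "y \<in> Wd 1"
    then have "\<not> E2 c a x y" using a_legi unfolding E2_def Wd_def by auto
    then show "?R x y = adj GG x y" unfolding adjG by blast
  qed
  also have "\<dots> = csf (spider (drop 1 \<tau>) (drop 1 Gs))" using ctxd.isoD[OF ctxd1] by simp
  finally show ?thesis by (simp add: drop_Suc)
qed

lemma part2: "cs V RP m = sf_times (csf PP) (csf HH) m"
proof -
  have "cs V RP m = cs (U 2 \<union> Wd 2) RP m" using V_split(1)[of 2] by simp
  also have "\<dots> = sf_times (cs (U 2) RP) (cs (Wd 2) RP) m"
  proof (rule cs_union)
    show "finite (U 2)" by (rule finU)
    show "finite (Wd 2)" using finV unfolding Wd_def by simp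
    show "U 2 \<inter> Wd 2 = {}" by (rule V_split(2))
    fix x y assume xy: "x \<in> U 2 \<union> Wd 2" "y \<in> U 2 \<union> Wd 2" and R: "RP x y"
    then have V: "x \<in> V" "y \<in> V" using V_split(1)[of 2] by auto
    from R show "x \<in> U 2 \<longleftrightarrow> y \<in> U 2" unfolding RP_def
    proof
      assume "R0 x y" then show ?thesis using R0_side V by simp
    next
      assume "E2 a b x y" then show ?thesis using a_legi b_legi V unfolding E2_def U_def by auto
    qed
  qed
  also have "cs (U 2) RP = csf PP" using isoP by simp
  also have "cs (Wd 2) RP = cs (Wd 2) (adj GG)"
  proof (rule cs_cong)
    fix x y assume "x \<in> Wd 2" "y \<in> Wd 2"
    then have "\<not> E2 c a x y" "\<not> E2 c b x y" "\<not> E2 a b x y" using a_legi b_legi unfolding E2_def Wd_def by auto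
    then show "RP x y = adj GG x y" unfolding adjG RP_def by blast
  qed
  also have "\<dots> = csf HH" using ctxd.isoD[OF ctxd2] by simp
  finally show ?thesis .
qed

lemma main: "csf GG m = csf TT m + sf_times (csf QQ) (csf (spider (tl \<tau>) (tl Gs))) m - sf_times (csf PP) (csf HH) m"
proof -
  have tr: "cs V (\<lambda>x y. (R0 x y \<or> E2 c a x y) \<or> E2 c b x y) m + cs V (\<lambda>x y. R0 x y \<or> E2 a b x y) m
       = cs V (\<lambda>x y. (R0 x y \<or> E2 c a x y) \<or> E2 a b x y) m + cs V (\<lambda>x y. R0 x y \<or> E2 c b x y) m"
    by (rule cs_triple[OF finV abc_V])
  have 1: "csf GG m = cs V (\<lambda>x y. (R0 x y \<or> E2 c a x y) \<or> E2 c b x y) m" using csfG by simp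
  have 2: "csf TT m = cs V (\<lambda>x y. (R0 x y \<or> E2 c a x y) \<or> E2 a b x y) m" using isoT unfolding Rt_def[abs_def] by simp
  have 3: "cs V (\<lambda>x y. R0 x y \<or> E2 a b x y) m = sf_times (csf PP) (csf HH) m" using part2 unfolding RP_def[abs_def] by simp
  show ?thesis using tr 1 2 3 part1 by simp
qed

end

theorem proposition4p1:
  fixes \<tau> :: "nat list" and Gs :: "('a graph \<times> 'a) list"
  assumes "length \<tau> = length Gs" and "length \<tau> \<ge> 3"
    and "\<tau> ! 0 \<ge> 1" and "\<tau> ! 1 \<ge> 1"
    and "\<forall>Gu\<in>set Gs. wf_rooted Gu"
  shows "let G = spider \<tau> Gs;
             H = spider (drop 2 \<tau>) (drop 2 Gs);
             T = spider [\<tau> ! 0 - 1, \<tau> ! 1, 1]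
                   [rmap Inl (Gs ! 0), rmap Inl (Gs ! 1), rmap Inr (H, spider_center)]
         in \<forall>m. csf G m
               = csf T m
                 + sf_times (csf (pendant (\<tau> ! 0 - 1) (Gs ! 0))) (csf (spider (tl \<tau>) (tl Gs))) m
                 - sf_times (csf (Pk (\<tau> ! 0 + \<tau> ! 1 - 1) (Gs ! 0) (Gs ! 1))) (csf H) m"
proof -
  interpret ctx \<tau> Gs using assms by unfold_locales
  show ?thesis unfolding Let_def using main by blast
qed


end
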